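(* Let $G$ be a finite group, $f:G\to X$ a function, and $\pi:G\to U(V)$, $\pi':G\to U(W)$ two finite-dimensional unitary representations with $I(V)=I(W)$. Then for every $t\ge1$, the optimal success probability of a $t$-query algorithm for the symmetric oracle problem $(G,V,f)$ equals that for $(G,W,f)$. That is, the optimal $t$-query success probability depends only on $I(V)$ and $f$.
   Context: For a representation $V$ of a finite group $G$ with character $\chi_V$, $I(V)$ denotes the set of irreducible characters $\chi$ of $G$ with $\langle\chi,\chi_V\rangle>0$ (i.e. appearing in $V$). A $t$-query (adaptive) algorithm for $(G,V,f)$, with $f:G\to X$, consists of $N\ge1$, a unit vector $\psi\in V\otimes\mathbb{C}^N$, unitaries $U_1,\dots,U_t$ on $V\otimes\mathbb{C}^N$ and a POVM $\{E_x\}_{x\in X}$; on hidden $a$ it produces $\psi_a=U_t(\pi(a)\otimes I)\cdots U_1(\pi(a)\otimes I)\psi$, and its success probability is $\frac1{|G|}\sum_{a}\langle\psi_a|E_{f(a)}|\psi_a\rangle$. The optimal success probability is the supremum over all such algorithms (with arbitrary $N$). *)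

theory Defs
  imports "Jordan_Normal_Form.Matrix" "HOL-Algebra.Group"
begin

definition adj :: "complex mat \<Rightarrow> complex mat" where
  "adj A = mat (dim_col A) (dim_row A) (\<lambda>(i,j). cnj (A $$ (j,i)))"

definition unitary_mat :: "nat \<Rightarrow> complex mat \<Rightarrow> bool" where
  "unitary_mat n U \<longleftrightarrow> U \<in> carrier_mat n n \<and> adj U * U = 1\<^sub>m n \<and> U * adj U = 1\<^sub>m n"

definition vinner :: "complex vec \<Rightarrow> complex vec \<Rightarrow> complex" where
  "vinner v w = (\<Sum>i<dim_vec v. cnj (v $ i) * w $ i)"

definition psd :: "nat \<Rightarrow> complex mat \<Rightarrow> bool" where
  "psd n E \<longleftrightarrow> E \<in> carrier_mat n n \<and>
     (\<forall>v\<in>carrier_vec n. Im (vinner v (E *\<^sub>v v)) = 0 \<and> Re (vinner v (E *\<^sub>v v)) \<ge> 0)"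

definition mtrace :: "complex mat \<Rightarrow> complex" where
  "mtrace A = (\<Sum>i<dim_row A. A $$ (i,i))"

text \<open>Kronecker product A \<otimes> I_N (matrix of an operator on V tensored with identity on C^N).\<close>
definition tensor_id :: "complex mat \<Rightarrow> nat \<Rightarrow> complex mat" where
  "tensor_id A N = mat (dim_row A * N) (dim_col A * N)
     (\<lambda>(i,j). if i mod N = j mod N then A $$ (i div N, j div N) else 0)"

definition rep :: "('g,'b) monoid_scheme \<Rightarrow> nat \<Rightarrow> ('g \<Rightarrow> complex mat) \<Rightarrow> bool" where
  "rep G d \<pi> \<longleftrightarrow> (\<forall>g\<in>carrier G. \<pi> g \<in> carrier_mat d d) \<and>
     (\<forall>g\<in>carrier G. \<forall>h\<in>carrier G. \<pi> (g \<otimes>\<^bsub>G\<^esub> h) = \<pi> g * \<pi> h) \<and>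
     \<pi> \<one>\<^bsub>G\<^esub> = 1\<^sub>m d"

definition unitary_rep :: "('g,'b) monoid_scheme \<Rightarrow> nat \<Rightarrow> ('g \<Rightarrow> complex mat) \<Rightarrow> bool" where
  "unitary_rep G d \<pi> \<longleftrightarrow> rep G d \<pi> \<and> (\<forall>g\<in>carrier G. unitary_mat d (\<pi> g))"

definition subspace_vec :: "nat \<Rightarrow> complex vec set \<Rightarrow> bool" where
  "subspace_vec d S \<longleftrightarrow> S \<subseteq> carrier_vec d \<and> 0\<^sub>v d \<in> S \<and>
     (\<forall>v\<in>S. \<forall>w\<in>S. v + w \<in> S) \<and> (\<forall>c. \<forall>v\<in>S. c \<cdot>\<^sub>v v \<in> S)"

definition irreducible_rep :: "('g,'b) monoid_scheme \<Rightarrow> nat \<Rightarrow> ('g \<Rightarrow> complex mat) \<Rightarrow> bool" where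
  "irreducible_rep G d \<pi> \<longleftrightarrow> rep G d \<pi> \<and> d > 0 \<and>
     (\<forall>S. subspace_vec d S \<and> (\<forall>g\<in>carrier G. \<forall>v\<in>S. \<pi> g *\<^sub>v v \<in> S)
          \<longrightarrow> S = {0\<^sub>v d} \<or> S = carrier_vec d)"

definition character :: "('g,'b) monoid_scheme \<Rightarrow> ('g \<Rightarrow> complex mat) \<Rightarrow> 'g \<Rightarrow> complex" where
  "character G \<pi> g = (if g \<in> carrier G then mtrace (\<pi> g) else 0)"

definition char_inner :: "('g,'b) monoid_scheme \<Rightarrow> ('g \<Rightarrow> complex) \<Rightarrow> ('g \<Rightarrow> complex) \<Rightarrow> complex" where
  "char_inner G \<chi> \<psi> = (\<Sum>g\<in>carrier G. \<chi> g * cnj (\<psi> g)) / of_nat (card (carrier G))"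

definition irr_chars :: "('g,'b) monoid_scheme \<Rightarrow> ('g \<Rightarrow> complex) set" where
  "irr_chars G = {\<chi>. \<exists>d \<pi>. irreducible_rep G d \<pi> \<and> \<chi> = character G \<pi>}"

text \<open>I(V): irreducible characters occurring in V (the inner product is a real number).\<close>
definition Irr_in :: "('g,'b) monoid_scheme \<Rightarrow> ('g \<Rightarrow> complex mat) \<Rightarrow> ('g \<Rightarrow> complex) set" where
  "Irr_in G \<pi> = {\<chi> \<in> irr_chars G. Re (char_inner G \<chi> (character G \<pi>)) > 0}"

definition povm :: "nat \<Rightarrow> ('x \<Rightarrow> complex mat) \<Rightarrow> bool" where
  "povm n E \<longleftrightarrow> (\<forall>x. psd n (E x)) \<and> finite {x. E x \<noteq> 0\<^sub>m n n} \<and>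
     (\<forall>i<n. \<forall>j<n. (\<Sum>x\<in>{x. E x \<noteq> 0\<^sub>m n n}. E x $$ (i,j)) = 1\<^sub>m n $$ (i,j))"

definition algorithm :: "nat \<Rightarrow> nat \<Rightarrow> nat \<Rightarrow> complex vec \<Rightarrow> complex mat list \<Rightarrow> ('x \<Rightarrow> complex mat) \<Rightarrow> bool" where
  "algorithm d t N \<psi> Us E \<longleftrightarrow> N \<ge> 1 \<and> \<psi> \<in> carrier_vec (d * N) \<and> vinner \<psi> \<psi> = 1 \<and>
     length Us = t \<and> (\<forall>U\<in>set Us. unitary_mat (d * N) U) \<and> povm (d * N) E"

text \<open>psi_a = U_t (pi(a) \<otimes> I) ... U_1 (pi(a) \<otimes> I) psi, with Us = [U_1, ..., U_t].\<close>
definition run :: "complex mat \<Rightarrow> nat \<Rightarrow> complex vec \<Rightarrow> complex mat list \<Rightarrow> complex vec" where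
  "run A N \<psi> Us = foldl (\<lambda>v U. U *\<^sub>v (tensor_id A N *\<^sub>v v)) \<psi> Us"

definition success :: "('g,'b) monoid_scheme \<Rightarrow> ('g \<Rightarrow> complex mat) \<Rightarrow> ('g \<Rightarrow> 'x) \<Rightarrow>
     nat \<Rightarrow> complex vec \<Rightarrow> complex mat list \<Rightarrow> ('x \<Rightarrow> complex mat) \<Rightarrow> real" where
  "success G \<pi> f N \<psi> Us E =
     (\<Sum>a\<in>carrier G. Re (vinner (run (\<pi> a) N \<psi> Us) (E (f a) *\<^sub>v run (\<pi> a) N \<psi> Us)))
       / real (card (carrier G))"

definition opt_success :: "('g,'b) monoid_scheme \<Rightarrow> nat \<Rightarrow> ('g \<Rightarrow> complex mat) \<Rightarrow> ('g \<Rightarrow> 'x) \<Rightarrow> nat \<Rightarrow> real" where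
  "opt_success G d \<pi> f t =
     Sup {success G \<pi> f N \<psi> Us E | N \<psi> Us E. algorithm d t N \<psi> Us E}"

end

theory Submission
  imports Defs "Jordan_Normal_Form.Char_Poly"
begin

lemma adj_dim[simp]: "dim_row (adj A) = dim_col A" "dim_col (adj A) = dim_row A"
  by (auto simp: adj_def)

lemma adj_carrier[simp,intro]: "A \<in> carrier_mat n m \<Longrightarrow> adj A \<in> carrier_mat m n"
  by (auto simp: adj_def)

lemma adj_index[simp]: "i < dim_col A \<Longrightarrow> j < dim_row A \<Longrightarrow> adj A $$ (i,j) = cnj (A $$ (j,i))"
  by (auto simp: adj_def)

lemma adj_adj[simp]: "adj (adj A) = A"
  by (rule eq_matI) auto

lemma adj_mult: assumes "A \<in> carrier_mat n m" "B \<in> carrier_mat m p"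
  shows "adj (A * B) = adj B * adj A"
  by (rule eq_matI) (use assms in \<open>auto simp: scalar_prod_def row_def col_def intro!: sum.cong\<close>)

lemma adj_one[simp]: "adj (1\<^sub>m n) = 1\<^sub>m n"
  by (rule eq_matI) auto

lemma adj_zero[simp]: "adj (0\<^sub>m n m) = 0\<^sub>m m n"
  by (rule eq_matI) auto

lemma adj_add: assumes "A \<in> carrier_mat n m" "B \<in> carrier_mat n m"
  shows "adj (A + B) = adj A + adj B"
  by (rule eq_matI) (use assms in auto)

lemma adj_minus: assumes "A \<in> carrier_mat n m" "B \<in> carrier_mat n m"
  shows "adj (A - B) = adj A - adj B"
  by (rule eq_matI) (use assms in auto)

lemma adj_smult: "adj (c \<cdot>\<^sub>m A) = cnj c \<cdot>\<^sub>m adj A"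
  by (rule eq_matI) auto

lemma vinner_adj: assumes "A \<in> carrier_mat n m" "v \<in> carrier_vec n" "w \<in> carrier_vec m"
  shows "vinner v (A *\<^sub>v w) = vinner (adj A *\<^sub>v v) w"
proof -
  have 1: "(A *\<^sub>v w) $ i = (\<Sum>j<m. A $$ (i,j) * w $ j)" if "i < n" for i
    using assms that by (simp add: scalar_prod_def row_def atLeast0LessThan)
  have 2: "(adj A *\<^sub>v v) $ j = (\<Sum>i<n. cnj (A $$ (i,j)) * v $ i)" if "j < m" for j
    using assms that by (simp add: scalar_prod_def row_def atLeast0LessThan)
  have "vinner v (A *\<^sub>v w) = (\<Sum>i<n. cnj (v $ i) * (\<Sum>j<m. A $$ (i,j) * w $ j))"
    unfolding vinner_def using assms 1 by (intro sum.cong) auto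
  also have "\<dots> = (\<Sum>i<n. \<Sum>j<m. cnj (v $ i) * A $$ (i,j) * w $ j)"
    by (simp add: sum_distrib_left mult.assoc)
  also have "\<dots> = (\<Sum>j<m. \<Sum>i<n. cnj (v $ i) * A $$ (i,j) * w $ j)"
    by (rule sum.swap)
  also have "\<dots> = (\<Sum>j<m. cnj (\<Sum>i<n. cnj (A $$ (i,j)) * v $ i) * w $ j)"
    by (simp add: sum_distrib_right sum_distrib_left mult.commute mult.left_commute)
  also have "\<dots> = vinner (adj A *\<^sub>v v) w"
    unfolding vinner_def using assms 2 by (intro sum.cong) auto
  finally show ?thesis .
qed

lemma vinner_self_real: "vinner v v = of_real (\<Sum>i<dim_vec v. (cmod (v $ i))\<^sup>2)"
  unfolding vinner_def of_real_sum by (intro sum.cong refl) (simp only: complex_norm_square mult.commute)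

lemma vinner_self_nonneg: "Re (vinner v v) \<ge> 0" "Im (vinner v v) = 0"
  unfolding vinner_self_real by (auto intro: sum_nonneg)

lemma vinner_self_zero: assumes "v \<in> carrier_vec n" "vinner v v = 0" shows "v = 0\<^sub>v n"
proof -
  have "(\<Sum>i<n. (cmod (v $ i))\<^sup>2) = 0" using assms vinner_self_real[of v]
    by (metis carrier_vecD of_real_eq_0_iff)
  hence "\<forall>i\<in>{..<n}. (cmod (v $ i))\<^sup>2 = 0" by (subst (asm) sum_nonneg_eq_0_iff) auto
  thus ?thesis using assms by (intro eq_vecI) auto
qed

lemma vinner_add_right: assumes "v \<in> carrier_vec n" "w \<in> carrier_vec n" "u \<in> carrier_vec n"
  shows "vinner v (w + u) = vinner v w + vinner v u"
  using assms by (auto simp: vinner_def sum.distrib algebra_simps)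

lemma vinner_smult_right: assumes "v \<in> carrier_vec n" "w \<in> carrier_vec n"
  shows "vinner v (c \<cdot>\<^sub>v w) = c * vinner v w"
  using assms by (auto simp: vinner_def sum_distrib_left algebra_simps)

lemma mat_eq_by_vec: fixes A B :: "'a::comm_ring_1 mat" assumes "A \<in> carrier_mat n m" "B \<in> carrier_mat n m"
  "\<And>v. v \<in> carrier_vec m \<Longrightarrow> A *\<^sub>v v = B *\<^sub>v v"
shows "A = B"
proof -
  { fix i j assume ij: "i < n" "j < m"
    have "(A *\<^sub>v unit_vec m j) $ i = (B *\<^sub>v unit_vec m j) $ i" using assms(3)[of "unit_vec m j"] by simp
    moreover have "(A *\<^sub>v unit_vec m j) $ i = A $$ (i,j)" using assms(1,2) ij by (simp add: scalar_prod_right_unit)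
    moreover have "(B *\<^sub>v unit_vec m j) $ i = B $$ (i,j)" using assms(1,2) ij by (simp add: scalar_prod_right_unit)
    ultimately have "A $$ (i, j) = B $$ (i, j)" by simp }
  note eq = this
  show ?thesis using assms by (intro eq_matI) (auto simp: eq)
qed

lemma tensor_id_dim[simp]: "dim_row (tensor_id A N) = dim_row A * N" "dim_col (tensor_id A N) = dim_col A * N"
  by (auto simp: tensor_id_def)

lemma tensor_id_carrier[simp,intro]: "A \<in> carrier_mat n m \<Longrightarrow> tensor_id A N \<in> carrier_mat (n*N) (m*N)"
  by (auto simp: tensor_id_def)

lemma tensor_id_index[simp]: "i < dim_row A * N \<Longrightarrow> j < dim_col A * N \<Longrightarrow>
  tensor_id A N $$ (i,j) = (if i mod N = j mod N then A $$ (i div N, j div N) else 0)"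
  by (auto simp: tensor_id_def)

lemma sum_mod_select:
  fixes g :: "nat \<Rightarrow> 'a::comm_monoid_add"
  assumes "c < N"
  shows "(\<Sum>k<m*N. if k mod N = c then g (k div N) else 0) = (\<Sum>r<m. g r)"
proof (induction m)
  case 0 then show ?case by simp
next
  case (Suc m)
  have split: "{..<Suc m * N} = {..<m*N} \<union> {m*N..<m*N+N}" by auto
  have "(\<Sum>k\<in>{m*N..<m*N+N}. if k mod N = c then g (k div N) else 0)
      = (\<Sum>s<N. if (m*N+s) mod N = c then g ((m*N+s) div N) else 0)"
  proof -
    have "{m*N..<m*N+N} = {0+m*N..<N+m*N}" by (simp add: add.commute)
    thus ?thesis by (simp only: sum.shift_bounds_nat_ivl lessThan_atLeast0 add.commute)
  qed
  also have "\<dots> = (\<Sum>s<N. if s = c then g m else 0)"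
    using assms by (intro sum.cong) auto
  also have "\<dots> = g m" using assms by simp
  finally have 2: "(\<Sum>k\<in>{m*N..<m*N+N}. if k mod N = c then g (k div N) else 0) = g m" .
  have "(\<Sum>k<Suc m*N. if k mod N = c then g (k div N) else 0)
      = (\<Sum>k<m*N. if k mod N = c then g (k div N) else 0)
        + (\<Sum>k\<in>{m*N..<m*N+N}. if k mod N = c then g (k div N) else 0)"
    unfolding split by (rule sum.union_disjoint) auto
  thus ?case using Suc 2 by simp
qed

lemma tensor_id_mult:
  assumes A: "A \<in> carrier_mat n m" and B: "B \<in> carrier_mat m p"
  shows "tensor_id A N * tensor_id B N = tensor_id (A * B) N"
proof (rule eq_matI)
  fix i j assume i: "i < dim_row (tensor_id (A * B) N)" and j: "j < dim_col (tensor_id (A * B) N)"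
  have i': "i < n * N" and j': "j < p * N" using i j A B by auto
  have Npos: "N > 0" using i' by (cases N) auto
  have idiv: "i div N < n" using i' by (simp add: less_mult_imp_div_less)
  have jdiv: "j div N < p" using j' by (simp add: less_mult_imp_div_less)
  have "(tensor_id A N * tensor_id B N) $$ (i,j) =
     (\<Sum>k<m*N. (if i mod N = k mod N then A $$ (i div N, k div N) else 0) *
                (if k mod N = j mod N then B $$ (k div N, j div N) else 0))"
    using A B i' j' by (simp add: scalar_prod_def row_def col_def atLeast0LessThan)
  also have "\<dots> = (\<Sum>k<m*N. if k mod N = j mod N then
        (if i mod N = j mod N then A $$ (i div N, k div N) * B $$ (k div N, j div N) else 0) else 0)"
    by (intro sum.cong) auto
  also have "\<dots> = (\<Sum>r<m. if i mod N = j mod N then A $$ (i div N, r) * B $$ (r, j div N) else 0)"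
    using Npos by (intro sum_mod_select) auto
  also have "\<dots> = tensor_id (A * B) N $$ (i,j)"
    using A B i' j' idiv jdiv by (simp add: scalar_prod_def row_def col_def atLeast0LessThan)
  finally show "(tensor_id A N * tensor_id B N) $$ (i,j) = tensor_id (A * B) N $$ (i,j)" .
qed (use A B in auto)

lemma tensor_id_adj: "adj (tensor_id A N) = tensor_id (adj A) N"
proof (rule eq_matI)
  fix i j assume "i < dim_row (tensor_id (adj A) N)" "j < dim_col (tensor_id (adj A) N)"
  thus "adj (tensor_id A N) $$ (i,j) = tensor_id (adj A) N $$ (i,j)"
    by (auto simp: less_mult_imp_div_less)
qed auto

lemma tensor_id_one: "tensor_id (1\<^sub>m n) N = 1\<^sub>m (n*N)"
proof (rule eq_matI)
  fix i j assume ij: "i < dim_row (1\<^sub>m (n*N))" "j < dim_col (1\<^sub>m (n*N))"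
  have "(i mod N = j mod N \<and> i div N = j div N) = (i = j)"
    by (metis div_mult_mod_eq)
  thus "tensor_id (1\<^sub>m n) N $$ (i,j) = 1\<^sub>m (n*N) $$ (i,j)"
    using ij by (auto simp: less_mult_imp_div_less)
qed auto

lemma tensor_id_1: "A \<in> carrier_mat n m \<Longrightarrow> tensor_id A 1 = A"
  by (rule eq_matI) auto

lemma tensor_id_tensor_id: "tensor_id (tensor_id A M) N = tensor_id A (M*N)"
proof (rule eq_matI)
  fix i j assume ij: "i < dim_row (tensor_id A (M*N))" "j < dim_col (tensor_id A (M*N))"
  have i: "i < dim_row A * M * N" and j: "j < dim_col A * M * N" using ij by (auto simp: mult.assoc)
  have e1: "i mod (M*N) = N * (i div N mod M) + i mod N" by (metis mod_mult2_eq mult.commute)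
  have e2: "j mod (M*N) = N * (j div N mod M) + j mod N" by (metis mod_mult2_eq mult.commute)
  have Npos: "N > 0" using i by (cases N) auto
  have key: "(i mod (M*N) = j mod (M*N)) = (i mod N = j mod N \<and> i div N mod M = j div N mod M)"
  proof
    assume h: "i mod (M*N) = j mod (M*N)"
    hence "(N * (i div N mod M) + i mod N) = (N * (j div N mod M) + j mod N)" using e1 e2 by simp
    hence "(N * (i div N mod M) + i mod N) div N = (N * (j div N mod M) + j mod N) div N"
          "(N * (i div N mod M) + i mod N) mod N = (N * (j div N mod M) + j mod N) mod N" by auto
    thus "i mod N = j mod N \<and> i div N mod M = j div N mod M" using Npos by simp
  qed (simp add: e1 e2)
  have d1: "i div N div M = i div (M*N)" "j div N div M = j div (M*N)"
    by (metis div_mult2_eq mult.commute)+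
  have "i div N < dim_row A * M" "j div N < dim_col A * M" using i j by (auto simp: less_mult_imp_div_less)
  thus "tensor_id (tensor_id A M) N $$ (i,j) = tensor_id A (M*N) $$ (i,j)"
    using i j ij key d1 by auto
qed (auto simp: mult.assoc)

definition lift :: "complex mat \<Rightarrow> complex mat \<Rightarrow> complex mat" where
  "lift K U = K * U * adj K + (1\<^sub>m (dim_row K) - K * adj K)"

locale isom =
  fixes K :: "complex mat" and n m :: nat
  assumes K: "K \<in> carrier_mat n m" and KK: "adj K * K = 1\<^sub>m m"
begin

definition P where "P = 1\<^sub>m n - K * adj K"

lemma dims[simp]: "dim_row K = n" "dim_col K = m" using K by auto

lemma carr[simp]: "K \<in> carrier_mat n m" "adj K \<in> carrier_mat m n" "P \<in> carrier_mat n n"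
   "K * adj K \<in> carrier_mat n n"
  using K by (auto simp: P_def)

lemma PK: "P * K = 0\<^sub>m n m"
proof -
  have "P * K = 1\<^sub>m n * K - K * adj K * K" unfolding P_def
    by (rule minus_mult_distrib_mat[OF one_carrier_mat carr(4) carr(1)])
  also have "K * adj K * K = K * (adj K * K)" by (rule assoc_mult_mat[OF carr(1) carr(2) carr(1)])
  also have "\<dots> = K" unfolding KK by (rule right_mult_one_mat[OF carr(1)])
  also have "1\<^sub>m n * K = K" by (rule left_mult_one_mat[OF carr(1)])
  also have "K - K = 0\<^sub>m n m" by (rule minus_r_inv_mat[OF carr(1)])
  finally show ?thesis .
qed

lemma adjP: "adj P = P"
proof -
  have "adj P = adj (1\<^sub>m n) - adj (K * adj K)" unfolding P_def by (rule adj_minus[OF one_carrier_mat carr(4)])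
  also have "adj (K * adj K) = adj (adj K) * adj K" by (rule adj_mult[OF carr(1) carr(2)])
  finally show ?thesis unfolding adj_adj adj_one P_def .
qed

lemma KP: "adj K * P = 0\<^sub>m m n"
proof -
  have "adj (P * K) = adj K * adj P" by (rule adj_mult[OF carr(3) carr(1)])
  thus ?thesis unfolding PK adjP adj_zero by (rule sym)
qed

lemma PP: "P * P = P"
proof -
  have "P * P = P * (1\<^sub>m n - K * adj K)" unfolding P_def by (rule refl)
  also have "\<dots> = P * 1\<^sub>m n - P * (K * adj K)"
    by (rule mult_minus_distrib_mat[OF carr(3) one_carrier_mat carr(4)])
  also have "P * (K * adj K) = P * K * adj K" by (rule assoc_mult_mat[symmetric, OF carr(3) carr(1) carr(2)])
  also have "\<dots> = 0\<^sub>m n n" unfolding PK by (rule left_mult_zero_mat[OF carr(2)])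
  also have "P * 1\<^sub>m n = P" by (rule right_mult_one_mat[OF carr(3)])
  also have "P - 0\<^sub>m n n = P" by (rule eq_matI) (simp_all add: carrier_matD[OF carr(3)])
  finally show ?thesis .
qed

lemma lift_eq: "lift K U = K * U * adj K + P"
  by (simp add: lift_def P_def)

lemma KUK: "U \<in> carrier_mat m m \<Longrightarrow> K * U * adj K \<in> carrier_mat n n"
  by (meson carr mult_carrier_mat)

lemma lift_carrier: assumes U: "U \<in> carrier_mat m m" shows "lift K U \<in> carrier_mat n n"
  unfolding lift_eq by (rule add_carrier_mat[OF carr(3)])

lemma lift_K: assumes U: "U \<in> carrier_mat m m" shows "lift K U * K = K * U"
proof -
  have KU: "K * U \<in> carrier_mat n m" using carr(1) U by (rule mult_carrier_mat)
  have "lift K U * K = K * U * adj K * K + P * K" unfolding lift_eq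
    by (rule add_mult_distrib_mat[OF KUK[OF U] carr(3) carr(1)])
  also have "K * U * adj K * K = K * U * (adj K * K)" by (rule assoc_mult_mat[OF KU carr(2) carr(1)])
  also have "K * U * (adj K * K) = K * U" unfolding KK by (rule right_mult_one_mat[OF KU])
  also have "K * U + P * K = K * U" unfolding PK by (rule right_add_zero_mat[OF KU])
  finally show ?thesis .
qed

lemma adj_lift: assumes U: "U \<in> carrier_mat m m" shows "adj (lift K U) = K * adj U * adj K + P"
proof -
  have KU: "K * U \<in> carrier_mat n m" using carr(1) U by (rule mult_carrier_mat)
  have "adj (lift K U) = adj (K * U * adj K) + adj P" unfolding lift_eq
    by (rule adj_add[OF KUK[OF U] carr(3)])
  also have "adj (K * U * adj K) = adj (adj K) * adj (K * U)" by (rule adj_mult[OF KU carr(2)])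
  also have "adj (K * U) = adj U * adj K" by (rule adj_mult[OF carr(1) U])
  also have "adj (adj K) * (adj U * adj K) = K * adj U * adj K"
    unfolding adj_adj by (rule assoc_mult_mat[symmetric, OF carr(1) adj_carrier[OF U] carr(2)])
  finally show ?thesis unfolding adjP .
qed

lemma sandwich: assumes A: "A \<in> carrier_mat m m" and B: "B \<in> carrier_mat m m"
  shows "(K * A * adj K + P) * (K * B * adj K + P) = K * (A * B) * adj K + P"
proof -
  have KA: "K * A \<in> carrier_mat n m" using carr(1) A by (rule mult_carrier_mat)
  have KB: "K * B \<in> carrier_mat n m" using carr(1) B by (rule mult_carrier_mat)
  have KAB: "K * (A * B) \<in> carrier_mat n m" using carr(1) mult_carrier_mat[OF A B] by (rule mult_carrier_mat)
  note c = KUK[OF A] KUK[OF B]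
  have "(K * A * adj K + P) * (K * B * adj K + P) =
        (K * A * adj K) * (K * B * adj K + P) + P * (K * B * adj K + P)"
    by (rule add_mult_distrib_mat[OF c(1) carr(3) add_carrier_mat[OF carr(3)]])
  also have "(K * A * adj K) * (K * B * adj K + P) = (K * A * adj K) * (K * B * adj K) + (K * A * adj K) * P"
    by (rule mult_add_distrib_mat[OF c(1) c(2) carr(3)])
  also have "P * (K * B * adj K + P) = P * (K * B * adj K) + P * P"
    by (rule mult_add_distrib_mat[OF carr(3) c(2) carr(3)])
  also have "(K * A * adj K) * (K * B * adj K) = K * A * (adj K * (K * B * adj K))"
    by (rule assoc_mult_mat[OF KA carr(2) c(2)])
  also have "adj K * (K * B * adj K) = adj K * (K * B) * adj K"
    by (rule assoc_mult_mat[symmetric, OF carr(2) KB carr(2)])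
  also have "adj K * (K * B) = adj K * K * B" by (rule assoc_mult_mat[symmetric, OF carr(2) carr(1) B])
  also have "adj K * K * B = B" unfolding KK by (rule left_mult_one_mat[OF B])
  also have "K * A * (B * adj K) = K * (A * B) * adj K"
  proof -
    have "K * A * (B * adj K) = K * A * B * adj K"
      by (rule assoc_mult_mat[symmetric, OF KA B carr(2)])
    also have "K * A * B = K * (A * B)" by (rule assoc_mult_mat[OF carr(1) A B])
    finally show ?thesis .
  qed
  also have "(K * A * adj K) * P = K * A * (adj K * P)" by (rule assoc_mult_mat[OF KA carr(2) carr(3)])
  also have "\<dots> = 0\<^sub>m n n" unfolding KP by (rule right_mult_zero_mat[OF KA])
  also have "P * (K * B * adj K) = P * (K * B) * adj K" by (rule assoc_mult_mat[symmetric, OF carr(3) KB carr(2)])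
  also have "P * (K * B) = P * K * B" by (rule assoc_mult_mat[symmetric, OF carr(3) carr(1) B])
  also have "P * K * B = 0\<^sub>m n m" unfolding PK by (rule left_mult_zero_mat[OF B])
  also have "0\<^sub>m n m * adj K = 0\<^sub>m n n" by (rule left_mult_zero_mat[OF carr(2)])
  also have "K * (A * B) * adj K + 0\<^sub>m n n = K * (A * B) * adj K" by (rule right_add_zero_mat[OF KUK[OF mult_carrier_mat[OF A B]]])
  also have "0\<^sub>m n n + P * P = P" unfolding PP by (rule left_add_zero_mat[OF carr(3)])
  finally show ?thesis .
qed

lemma lift_unitary: assumes U: "unitary_mat m U" shows "unitary_mat n (lift K U)"
proof -
  have Uc: "U \<in> carrier_mat m m" and U1: "adj U * U = 1\<^sub>m m" and U2: "U * adj U = 1\<^sub>m m"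
    using U by (auto simp: unitary_mat_def)
  have KK': "K * 1\<^sub>m m * adj K + P = 1\<^sub>m n"
  proof -
    have "K * 1\<^sub>m m = K" by (rule right_mult_one_mat[OF carr(1)])
    moreover have "K * adj K + (1\<^sub>m n - K * adj K) = 1\<^sub>m n"
      by (rule eq_matI) (simp_all add: carrier_matD[OF carr(4)])
    ultimately show ?thesis unfolding P_def by simp
  qed
  have "adj (lift K U) * lift K U = 1\<^sub>m n"
    unfolding adj_lift[OF Uc] unfolding lift_eq sandwich[OF adj_carrier[OF Uc] Uc] U1 by (rule KK')
  moreover have "lift K U * adj (lift K U) = 1\<^sub>m n"
    unfolding adj_lift[OF Uc] unfolding lift_eq sandwich[OF Uc adj_carrier[OF Uc]] U2 by (rule KK')
  ultimately show ?thesis unfolding unitary_mat_def using lift_carrier[OF Uc] by blast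
qed

end

lemma entry_sandwich:
  assumes A: "A \<in> carrier_mat n m" and B: "B \<in> carrier_mat m m" and i: "i < n" and j: "j < n"
  shows "(A * B * adj A) $$ (i,j) = (\<Sum>a<m. \<Sum>b<m. A $$ (i,a) * B $$ (a,b) * cnj (A $$ (j,b)))"
proof -
  have "(A * B * adj A) $$ (i,j) = (\<Sum>b<m. (A * B) $$ (i,b) * cnj (A $$ (j,b)))"
    using A B i j by (simp add: scalar_prod_def row_def col_def atLeast0LessThan)
  also have "\<dots> = (\<Sum>b<m. (\<Sum>a<m. A $$ (i,a) * B $$ (a,b)) * cnj (A $$ (j,b)))"
    using A B i j by (intro sum.cong refl) (simp add: scalar_prod_def row_def col_def atLeast0LessThan)
  also have "\<dots> = (\<Sum>b<m. \<Sum>a<m. A $$ (i,a) * B $$ (a,b) * cnj (A $$ (j,b)))"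
    by (simp add: sum_distrib_right)
  also have "\<dots> = (\<Sum>a<m. \<Sum>b<m. A $$ (i,a) * B $$ (a,b) * cnj (A $$ (j,b)))"
    by (rule sum.swap)
  finally show ?thesis .
qed

context isom
begin

definition povm_lift :: "'x \<Rightarrow> ('x \<Rightarrow> complex mat) \<Rightarrow> 'x \<Rightarrow> complex mat" where
  "povm_lift x0 E x = K * E x * adj K + (if x = x0 then P else 0\<^sub>m n n)"

lemma KEK_vec: assumes E: "E \<in> carrier_mat m m" and w: "w \<in> carrier_vec n"
  shows "(K * E * adj K) *\<^sub>v w = K *\<^sub>v (E *\<^sub>v (adj K *\<^sub>v w))"
proof -
  have KE: "K * E \<in> carrier_mat n m" using carr(1) E by (rule mult_carrier_mat)
  have "(K * E * adj K) *\<^sub>v w = (K * E) *\<^sub>v (adj K *\<^sub>v w)" by (rule assoc_mult_mat_vec[OF KE carr(2) w])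
  also have "\<dots> = K *\<^sub>v (E *\<^sub>v (adj K *\<^sub>v w))"
    by (rule assoc_mult_mat_vec[OF carr(1) E mult_mat_vec_carrier[OF carr(2) w]])
  finally show ?thesis .
qed

lemma vinner_P: assumes w: "w \<in> carrier_vec n" shows "vinner w (P *\<^sub>v w) = vinner (P *\<^sub>v w) (P *\<^sub>v w)"
proof -
  have "P *\<^sub>v w = (P * P) *\<^sub>v w" unfolding PP ..
  also have "\<dots> = P *\<^sub>v (P *\<^sub>v w)" by (rule assoc_mult_mat_vec[OF carr(3) carr(3) w])
  finally have "vinner w (P *\<^sub>v w) = vinner w (P *\<^sub>v (P *\<^sub>v w))" by simp
  also have "\<dots> = vinner (adj P *\<^sub>v w) (P *\<^sub>v w)"
    by (rule vinner_adj[OF carr(3) w mult_mat_vec_carrier[OF carr(3) w]])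
  finally show ?thesis unfolding adjP .
qed

lemma povm_lift_carrier: "E x \<in> carrier_mat m m \<Longrightarrow> povm_lift x0 E x \<in> carrier_mat n n"
  unfolding povm_lift_def by (rule add_carrier_mat) auto

lemma povm_lift_vinner:
  assumes E: "E x \<in> carrier_mat m m" and w: "w \<in> carrier_vec n"
  shows "vinner w (povm_lift x0 E x *\<^sub>v w) = vinner (adj K *\<^sub>v w) (E x *\<^sub>v (adj K *\<^sub>v w))
     + (if x = x0 then vinner (P *\<^sub>v w) (P *\<^sub>v w) else 0)"
proof -
  have c1: "K * E x * adj K \<in> carrier_mat n n" by (rule KUK[OF E])
  have c2: "(if x = x0 then P else 0\<^sub>m n n) \<in> carrier_mat n n" by auto
  have Kw: "adj K *\<^sub>v w \<in> carrier_vec m" using carr(2) w by (rule mult_mat_vec_carrier)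
  have "povm_lift x0 E x *\<^sub>v w = (K * E x * adj K) *\<^sub>v w + (if x = x0 then P else 0\<^sub>m n n) *\<^sub>v w"
    unfolding povm_lift_def by (rule add_mult_distrib_mat_vec[OF c1 c2 w])
  hence "vinner w (povm_lift x0 E x *\<^sub>v w) = vinner w ((K * E x * adj K) *\<^sub>v w) + vinner w ((if x = x0 then P else 0\<^sub>m n n) *\<^sub>v w)"
    using vinner_add_right[OF w mult_mat_vec_carrier[OF c1 w] mult_mat_vec_carrier[OF c2 w]] by simp
  also have "vinner w ((K * E x * adj K) *\<^sub>v w) = vinner (adj K *\<^sub>v w) (E x *\<^sub>v (adj K *\<^sub>v w))"
    unfolding KEK_vec[OF E w] by (rule vinner_adj[OF carr(1) w mult_mat_vec_carrier[OF E Kw]])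
  also have "vinner w ((if x = x0 then P else 0\<^sub>m n n) *\<^sub>v w) = (if x = x0 then vinner (P *\<^sub>v w) (P *\<^sub>v w) else 0)"
    using w vinner_P[OF w] by (auto simp: vinner_def)
  finally show ?thesis .
qed

lemma povm_lift_K:
  assumes E: "E x \<in> carrier_mat m m" and v: "v \<in> carrier_vec m"
  shows "vinner (K *\<^sub>v v) (povm_lift x0 E x *\<^sub>v (K *\<^sub>v v)) = vinner v (E x *\<^sub>v v)"
proof -
  have Kv: "K *\<^sub>v v \<in> carrier_vec n" using carr(1) v by (rule mult_mat_vec_carrier)
  have a: "adj K *\<^sub>v (K *\<^sub>v v) = v"
    using assoc_mult_mat_vec[OF carr(2) carr(1) v, symmetric] KK v by simp
  have z: "0\<^sub>m n m *\<^sub>v v = 0\<^sub>v n" by (rule eq_vecI) (use v in auto)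
  have b: "P *\<^sub>v (K *\<^sub>v v) = 0\<^sub>v n"
    using assoc_mult_mat_vec[OF carr(3) carr(1) v, symmetric] PK z by simp
  show ?thesis unfolding povm_lift_vinner[where E=E and x=x, OF E Kv] a b by (simp add: vinner_def)
qed

lemma povm_lift_psd: assumes "psd m (E x)" shows "psd n (povm_lift x0 E x)"
proof -
  have E: "E x \<in> carrier_mat m m" using assms by (simp add: psd_def)
  { fix w :: "complex vec" assume w: "w \<in> carrier_vec n"
    have Kw: "adj K *\<^sub>v w \<in> carrier_vec m" using carr(2) w by (rule mult_mat_vec_carrier)
    have h: "Im (vinner (adj K *\<^sub>v w) (E x *\<^sub>v (adj K *\<^sub>v w))) = 0"
            "Re (vinner (adj K *\<^sub>v w) (E x *\<^sub>v (adj K *\<^sub>v w))) \<ge> 0"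
      using assms Kw by (auto simp: psd_def)
    have "Im (vinner w (povm_lift x0 E x *\<^sub>v w)) = 0 \<and> Re (vinner w (povm_lift x0 E x *\<^sub>v w)) \<ge> 0"
      unfolding povm_lift_vinner[where E=E and x=x, OF E w] using h vinner_self_nonneg[of "P *\<^sub>v w"] by auto }
  thus ?thesis unfolding psd_def using povm_lift_carrier[where E=E and x=x, OF E] by blast
qed

lemma sum_KEK:
  assumes F: "finite F" and E: "\<And>x. x \<in> F \<Longrightarrow> E x \<in> carrier_mat m m"
    and S: "\<And>a b. a < m \<Longrightarrow> b < m \<Longrightarrow> (\<Sum>x\<in>F. E x $$ (a,b)) = 1\<^sub>m m $$ (a,b)"
    and i: "i < n" and j: "j < n"
  shows "(\<Sum>x\<in>F. (K * E x * adj K) $$ (i,j)) = (K * adj K) $$ (i,j)"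
proof -
  have "(\<Sum>x\<in>F. (K * E x * adj K) $$ (i,j)) = (\<Sum>x\<in>F. \<Sum>a<m. \<Sum>b<m. K $$ (i,a) * E x $$ (a,b) * cnj (K $$ (j,b)))"
    using E i j by (intro sum.cong refl entry_sandwich[OF carr(1)]) auto
  also have "\<dots> = (\<Sum>a<m. \<Sum>b<m. \<Sum>x\<in>F. K $$ (i,a) * E x $$ (a,b) * cnj (K $$ (j,b)))"
    by (simp add: sum.swap[of _ F] sum.swap[of _ F "{..<m}"])
  also have "\<dots> = (\<Sum>a<m. \<Sum>b<m. K $$ (i,a) * (\<Sum>x\<in>F. E x $$ (a,b)) * cnj (K $$ (j,b)))"
    by (simp add: sum_distrib_left sum_distrib_right)
  also have "\<dots> = (\<Sum>a<m. \<Sum>b<m. K $$ (i,a) * 1\<^sub>m m $$ (a,b) * cnj (K $$ (j,b)))"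
    using S by (intro sum.cong refl) auto
  also have "\<dots> = (\<Sum>a<m. K $$ (i,a) * cnj (K $$ (j,a)))"
  proof (intro sum.cong refl)
    fix a assume a: "a \<in> {..<m}"
    have "(\<Sum>b<m. K $$ (i,a) * 1\<^sub>m m $$ (a,b) * cnj (K $$ (j,b))) =
          (\<Sum>b<m. if b = a then K $$ (i,a) * cnj (K $$ (j,a)) else 0)"
      using a by (intro sum.cong refl) auto
    also have "\<dots> = K $$ (i,a) * cnj (K $$ (j,a))" using a by simp
    finally show "(\<Sum>b<m. K $$ (i,a) * 1\<^sub>m m $$ (a,b) * cnj (K $$ (j,b))) = K $$ (i,a) * cnj (K $$ (j,a))" .
  qed
  also have "\<dots> = (K * adj K) $$ (i,j)"
    using i j by (simp add: scalar_prod_def row_def col_def atLeast0LessThan)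
  finally show ?thesis .
qed

lemma povm_lift_povm: assumes E: "povm m E" shows "povm n (povm_lift x0 E)"
proof -
  define S where "S = {x. E x \<noteq> 0\<^sub>m m m}"
  define S' where "S' = {x. povm_lift x0 E x \<noteq> 0\<^sub>m n n}"
  have finS: "finite S" using E by (simp add: povm_def S_def)
  have Ec: "\<And>x. E x \<in> carrier_mat m m" using E by (simp add: povm_def psd_def)
  have sub: "S' \<subseteq> insert x0 S"
  proof
    fix x assume x: "x \<in> S'"
    show "x \<in> insert x0 S"
    proof (rule ccontr)
      assume "x \<notin> insert x0 S"
      hence "E x = 0\<^sub>m m m" "x \<noteq> x0" by (auto simp: S_def)
      hence "povm_lift x0 E x = 0\<^sub>m n n"
        unfolding povm_lift_def by (simp add: right_mult_zero_mat[OF carr(1)] left_mult_zero_mat[OF carr(2)])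
      thus False using x by (simp add: S'_def)
    qed
  qed
  have finS': "finite S'" using sub finS finite_subset by blast
  have SumS: "(\<Sum>x\<in>insert x0 S. E x $$ (a,b)) = 1\<^sub>m m $$ (a,b)" if "a < m" "b < m" for a b
  proof -
    have "(\<Sum>x\<in>insert x0 S. E x $$ (a,b)) = (\<Sum>x\<in>S. E x $$ (a,b))"
      using finS that by (intro sum.mono_neutral_right) (auto simp: S_def)
    thus ?thesis using E that by (simp add: povm_def S_def)
  qed
  { fix i j assume i: "i < n" and j: "j < n"
    have "(\<Sum>x\<in>S'. povm_lift x0 E x $$ (i,j)) = (\<Sum>x\<in>insert x0 S. povm_lift x0 E x $$ (i,j))"
      using finS sub i j by (intro sum.mono_neutral_left) (auto simp: S'_def)
    also have "\<dots> = (\<Sum>x\<in>insert x0 S. (K * E x * adj K) $$ (i,j) + (if x = x0 then P $$ (i,j) else 0))"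
    proof (intro sum.cong refl)
      fix x
      have c2: "(if x = x0 then P else 0\<^sub>m n n) \<in> carrier_mat n n" by auto
      have "povm_lift x0 E x $$ (i,j) = (K * E x * adj K) $$ (i,j) + (if x = x0 then P else 0\<^sub>m n n) $$ (i,j)"
        unfolding povm_lift_def using i j c2 by (intro index_add_mat(1)) auto
      thus "povm_lift x0 E x $$ (i,j) = (K * E x * adj K) $$ (i,j) + (if x = x0 then P $$ (i,j) else 0)"
        using i j by auto
    qed
    also have "\<dots> = (\<Sum>x\<in>insert x0 S. (K * E x * adj K) $$ (i,j)) + P $$ (i,j)"
      using finS by (simp add: sum.distrib)
    also have "(\<Sum>x\<in>insert x0 S. (K * E x * adj K) $$ (i,j)) = (K * adj K) $$ (i,j)"
      using finS Ec SumS i j by (intro sum_KEK) auto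
    also have "(K * adj K) $$ (i,j) + P $$ (i,j) = 1\<^sub>m n $$ (i,j)"
      using i j by (simp add: P_def carrier_matD[OF carr(4)])
    finally have "(\<Sum>x\<in>S'. povm_lift x0 E x $$ (i,j)) = 1\<^sub>m n $$ (i,j)" . }
  moreover have "\<forall>x. psd n (povm_lift x0 E x)"
    using E by (auto simp: povm_def intro: povm_lift_psd)
  ultimately show ?thesis unfolding povm_def S'_def[symmetric] using finS' by auto
qed

end

lemma run_Cons: "run A N v (U # Us) = run A N (U *\<^sub>v (tensor_id A N *\<^sub>v v)) Us"
  by (simp add: run_def)

lemma run_Nil: "run A N v [] = v"
  by (simp add: run_def)

lemma run_carrier: assumes A: "A \<in> carrier_mat d d" and v: "v \<in> carrier_vec (d*N)"
  and Us: "\<forall>U\<in>set Us. unitary_mat (d*N) U"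
  shows "run A N v Us \<in> carrier_vec (d*N)"
  using v Us
proof (induction Us arbitrary: v)
  case Nil then show ?case by (simp add: run_Nil)
next
  case (Cons U Us)
  have U: "U \<in> carrier_mat (d*N) (d*N)" using Cons by (simp add: unitary_mat_def)
  have "U *\<^sub>v (tensor_id A N *\<^sub>v v) \<in> carrier_vec (d*N)"
    using U tensor_id_carrier[OF A] Cons.prems(1) by (meson mult_mat_vec_carrier)
  thus ?case unfolding run_Cons using Cons by simp
qed

lemma simulate:
  fixes G :: "('g,'b) monoid_scheme" and \<pi> \<pi>' :: "'g \<Rightarrow> complex mat" and f :: "'g \<Rightarrow> 'x"
  assumes Jc: "J \<in> carrier_mat (d' * M) d" and JJ: "adj J * J = 1\<^sub>m d" and M: "M \<ge> 1"
  and inter: "\<forall>g\<in>carrier G. tensor_id (\<pi>' g) M * J = J * \<pi> g"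
  and pic: "\<forall>g\<in>carrier G. \<pi> g \<in> carrier_mat d d" and pic': "\<forall>g\<in>carrier G. \<pi>' g \<in> carrier_mat d' d'"
  and alg: "algorithm d t N \<psi> Us E"
  shows "\<exists>N' \<psi>' Us' E'. algorithm d' t N' \<psi>' Us' (E' :: 'x \<Rightarrow> complex mat) \<and>
           success G \<pi>' f N' \<psi>' Us' E' = success G \<pi> f N \<psi> Us E"
proof -
  define n where "n = d' * (M * N)"
  define m where "m = d * N"
  define K where "K = tensor_id J N"
  have N: "N \<ge> 1" and psi: "\<psi> \<in> carrier_vec m" and psi1: "vinner \<psi> \<psi> = 1"
    and len: "length Us = t" and Us: "\<forall>U\<in>set Us. unitary_mat m U" and E: "povm m E"
    using alg by (auto simp: algorithm_def m_def)
  have Kc: "K \<in> carrier_mat n m" unfolding K_def n_def m_def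
    using tensor_id_carrier[OF Jc, of N] by (simp add: mult.assoc)
  have KK: "adj K * K = 1\<^sub>m m" unfolding K_def m_def tensor_id_adj
    by (simp add: tensor_id_mult[OF adj_carrier[OF Jc] Jc] JJ tensor_id_one)
  interpret isom K n m using Kc KK by unfold_locales
  have inter2: "tensor_id (\<pi>' g) (M*N) * K = K * tensor_id (\<pi> g) N" if g: "g \<in> carrier G" for g
  proof -
    have "tensor_id (\<pi>' g) (M*N) * K = tensor_id (tensor_id (\<pi>' g) M) N * tensor_id J N"
      unfolding K_def tensor_id_tensor_id ..
    also have "\<dots> = tensor_id (tensor_id (\<pi>' g) M * J) N"
      by (rule tensor_id_mult[OF tensor_id_carrier[OF pic'[rule_format, OF g]] Jc])
    also have "\<dots> = tensor_id (J * \<pi> g) N" using inter g by simp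
    also have "\<dots> = K * tensor_id (\<pi> g) N"
      unfolding K_def by (rule tensor_id_mult[OF Jc pic[rule_format, OF g], symmetric])
    finally show ?thesis .
  qed
  have run_sim: "run (\<pi>' g) (M*N) (K *\<^sub>v v) (map (lift K) Vs) = K *\<^sub>v run (\<pi> g) N v Vs"
    if g: "g \<in> carrier G" and v: "v \<in> carrier_vec m" and Vs: "\<forall>U\<in>set Vs. unitary_mat m U" for g v Vs
    using v Vs
  proof (induction Vs arbitrary: v)
    case Nil then show ?case by (simp add: run_Nil)
  next
    case (Cons U Vs v)
    have Uc: "U \<in> carrier_mat m m" using Cons by (simp add: unitary_mat_def)
    have Pc: "tensor_id (\<pi> g) N \<in> carrier_mat m m" unfolding m_def using pic g by auto
    have Pc': "tensor_id (\<pi>' g) (M*N) \<in> carrier_mat n n" unfolding n_def using pic' g by auto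
    have w: "tensor_id (\<pi> g) N *\<^sub>v v \<in> carrier_vec m" using Pc Cons.prems(1) by (rule mult_mat_vec_carrier)
    have "lift K U *\<^sub>v (tensor_id (\<pi>' g) (M*N) *\<^sub>v (K *\<^sub>v v))
        = lift K U *\<^sub>v ((tensor_id (\<pi>' g) (M*N) * K) *\<^sub>v v)"
      using assoc_mult_mat_vec[OF Pc' carr(1) Cons.prems(1)] by simp
    also have "\<dots> = lift K U *\<^sub>v ((K * tensor_id (\<pi> g) N) *\<^sub>v v)" using inter2[OF g] by simp
    also have "\<dots> = lift K U *\<^sub>v (K *\<^sub>v (tensor_id (\<pi> g) N *\<^sub>v v))"
      using assoc_mult_mat_vec[OF carr(1) Pc Cons.prems(1)] by simp
    also have "\<dots> = (lift K U * K) *\<^sub>v (tensor_id (\<pi> g) N *\<^sub>v v)"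
      using assoc_mult_mat_vec[OF lift_carrier[OF Uc] carr(1) w] by simp
    also have "\<dots> = (K * U) *\<^sub>v (tensor_id (\<pi> g) N *\<^sub>v v)" unfolding lift_K[OF Uc] ..
    also have "\<dots> = K *\<^sub>v (U *\<^sub>v (tensor_id (\<pi> g) N *\<^sub>v v))"
      by (rule assoc_mult_mat_vec[OF carr(1) Uc w])
    finally have step: "lift K U *\<^sub>v (tensor_id (\<pi>' g) (M*N) *\<^sub>v (K *\<^sub>v v)) = K *\<^sub>v (U *\<^sub>v (tensor_id (\<pi> g) N *\<^sub>v v))" .
    have w2: "U *\<^sub>v (tensor_id (\<pi> g) N *\<^sub>v v) \<in> carrier_vec m" using Uc w by (rule mult_mat_vec_carrier)
    show ?case unfolding list.map(2) run_Cons step using Cons.IH[OF w2] Cons.prems(2) by simp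
  qed
  define \<psi>' where "\<psi>' = K *\<^sub>v \<psi>"
  define Us' where "Us' = map (lift K) Us"
  define E' where "E' = povm_lift (undefined :: 'x) E"
  have Kpsi: "\<psi>' \<in> carrier_vec n" unfolding \<psi>'_def using carr(1) psi by (rule mult_mat_vec_carrier)
  have "vinner \<psi>' \<psi>' = vinner (adj K *\<^sub>v \<psi>') \<psi>"
    unfolding \<psi>'_def by (rule vinner_adj[OF carr(1) Kpsi[unfolded \<psi>'_def] psi])
  also have "adj K *\<^sub>v \<psi>' = \<psi>" unfolding \<psi>'_def
    using assoc_mult_mat_vec[OF carr(2) carr(1) psi, symmetric] KK psi by simp
  finally have psi1': "vinner \<psi>' \<psi>' = 1" using psi1 by simp
  have Ec: "\<And>x. E x \<in> carrier_mat m m" using E by (simp add: povm_def psd_def)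
  have alg': "algorithm d' t (M*N) \<psi>' Us' E'"
    unfolding algorithm_def using M N Kpsi psi1' len Us lift_unitary povm_lift_povm[OF E]
    by (auto simp: n_def Us'_def E'_def)
  have "success G \<pi>' f (M*N) \<psi>' Us' E' = success G \<pi> f N \<psi> Us E"
    unfolding success_def
  proof (rule arg_cong[where f="\<lambda>x. x / _"], intro sum.cong refl arg_cong[where f=Re])
    fix a assume a: "a \<in> carrier G"
    have ra: "run (\<pi> a) N \<psi> Us \<in> carrier_vec m" unfolding m_def
      using run_carrier[OF pic[rule_format, OF a]] psi Us unfolding m_def by blast
    show "vinner (run (\<pi>' a) (M * N) \<psi>' Us') (E' (f a) *\<^sub>v run (\<pi>' a) (M * N) \<psi>' Us') =
          vinner (run (\<pi> a) N \<psi> Us) (E (f a) *\<^sub>v run (\<pi> a) N \<psi> Us)"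
      unfolding \<psi>'_def Us'_def run_sim[OF a psi Us] E'_def
      by (rule povm_lift_K[where E=E and x="f a", OF Ec ra])
  qed
  with alg' show ?thesis by blast
qed

section \<open>Isometries and orthonormal bases of subspaces\<close>

lemma adj_mult_index: assumes C: "C \<in> carrier_mat n j" and D: "D \<in> carrier_mat n k" and a: "a < j" and b: "b < k"
  shows "(adj C * D) $$ (a,b) = (\<Sum>i<n. cnj (C $$ (i,a)) * D $$ (i,b))"
  using assms by (simp add: scalar_prod_def row_def col_def atLeast0LessThan)

lemma isometry_le: assumes C: "C \<in> carrier_mat n j" and CC: "adj C * C = 1\<^sub>m j"
  shows "j \<le> n"
proof (rule ccontr)
  assume "\<not> j \<le> n"
  hence nj: "n < j" by simp
  define D where "D = mat j j (\<lambda>(a,b). if a < n then C $$ (a,b) else 0)"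
  have Dc: "D \<in> carrier_mat j j" by (simp add: D_def)
  have "adj D * D = 1\<^sub>m j"
  proof (rule eq_matI)
    fix a b assume ab: "a < dim_row (1\<^sub>m j)" "b < dim_col (1\<^sub>m j)"
    have "(adj D * D) $$ (a,b) = (\<Sum>i<j. cnj (D $$ (i,a)) * D $$ (i,b))"
      using ab Dc by (intro adj_mult_index) auto
    also have "\<dots> = (\<Sum>i<n. cnj (D $$ (i,a)) * D $$ (i,b))"
      using nj ab by (intro sum.mono_neutral_right) (auto simp: D_def)
    also have "\<dots> = (\<Sum>i<n. cnj (C $$ (i,a)) * C $$ (i,b))"
      using ab nj by (intro sum.cong refl) (auto simp: D_def)
    also have "\<dots> = (adj C * C) $$ (a,b)" using ab C by (intro adj_mult_index[symmetric]) auto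
    finally show "(adj D * D) $$ (a,b) = 1\<^sub>m j $$ (a,b)" unfolding CC .
  qed (auto simp: D_def)
  hence "D * adj D = 1\<^sub>m j" by (rule mat_mult_left_right_inverse[OF adj_carrier[OF Dc] Dc])
  hence "(D * adj D) $$ (j-1, j-1) = 1" using nj by simp
  moreover have "(D * adj D) $$ (j-1, j-1) = 0"
  proof -
    have "\<not> (j - Suc 0 < n)" using nj by simp
    thus ?thesis using nj by (simp add: D_def scalar_prod_def row_def col_def)
  qed
  ultimately show False by simp
qed

definition range_in :: "complex mat \<Rightarrow> nat \<Rightarrow> complex vec set \<Rightarrow> bool" where
  "range_in C j S \<longleftrightarrow> (\<forall>x\<in>carrier_vec j. C *\<^sub>v x \<in> S)"

lemma subspace_lincomb:
  assumes S: "subspace_vec n S" and v: "v \<in> S" and w: "w \<in> S"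
  shows "a \<cdot>\<^sub>v v + b \<cdot>\<^sub>v w \<in> S"
  using S v w unfolding subspace_vec_def by blast

lemma subspace_minus:
  assumes S: "subspace_vec n S" and v: "v \<in> S" and w: "w \<in> S"
  shows "v - w \<in> S"
proof -
  have "v \<in> carrier_vec n" "w \<in> carrier_vec n" using S v w by (auto simp: subspace_vec_def)
  hence eq: "v - w = 1 \<cdot>\<^sub>v v + (-1) \<cdot>\<^sub>v w" by (intro eq_vecI) auto
  show ?thesis unfolding eq by (rule subspace_lincomb[OF S v w])
qed

lemma extend_isometry:
  assumes S: "subspace_vec n S" and C: "C \<in> carrier_mat n j" and CC: "adj C * C = 1\<^sub>m j"
    and R: "range_in C j S" and v: "v \<in> S" and nv: "\<forall>x\<in>carrier_vec j. v \<noteq> C *\<^sub>v x"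
  shows "\<exists>C'. C' \<in> carrier_mat n (Suc j) \<and> adj C' * C' = 1\<^sub>m (Suc j) \<and> range_in C' (Suc j) S"
proof -
  have vc: "v \<in> carrier_vec n" using S v by (auto simp: subspace_vec_def)
  define y where "y = adj C *\<^sub>v v"
  have yc: "y \<in> carrier_vec j" unfolding y_def by (rule mult_mat_vec_carrier[OF adj_carrier[OF C] vc])
  define w where "w = v - C *\<^sub>v y"
  have Cy: "C *\<^sub>v y \<in> carrier_vec n" using C yc by simp
  have wc: "w \<in> carrier_vec n" using Cy vc by (simp add: w_def)
  have wS: "w \<in> S" unfolding w_def using subspace_minus[OF S v] R yc by (simp add: range_in_def)
  have Cw: "adj C *\<^sub>v w = 0\<^sub>v j"
  proof -
    have "adj C *\<^sub>v w = adj C *\<^sub>v v - adj C *\<^sub>v (C *\<^sub>v y)"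
      unfolding w_def by (rule mult_minus_distrib_mat_vec[OF adj_carrier[OF C] vc Cy])
    also have "adj C *\<^sub>v (C *\<^sub>v y) = (adj C * C) *\<^sub>v y"
      by (rule assoc_mult_mat_vec[symmetric, OF adj_carrier[OF C] C yc])
    also have "\<dots> = y" using CC yc by simp
    finally show ?thesis using yc by (simp add: y_def)
  qed
  have wnz: "w \<noteq> 0\<^sub>v n"
  proof
    assume w0: "w = 0\<^sub>v n"
    have "v = C *\<^sub>v y"
    proof (rule eq_vecI)
      fix i assume i: "i < dim_vec (C *\<^sub>v y)"
      hence i': "i < n" using C by simp
      have "w $ i = 0" using w0 i' by simp
      moreover have "(v - C *\<^sub>v y) $ i = v $ i - (C *\<^sub>v y) $ i"
        using i' C by (intro index_minus_vec(1)) auto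
      ultimately show "v $ i = (C *\<^sub>v y) $ i" by (simp add: w_def)
    qed (use vc C in auto)
    thus False using nv yc by blast
  qed
  define r where "r = sqrt (Re (vinner w w))"
  have rpos: "r > 0"
  proof -
    have "vinner w w \<noteq> 0" using vinner_self_zero[OF wc] wnz by blast
    hence "Re (vinner w w) \<noteq> 0" using vinner_self_nonneg(2)[of w] by (simp add: complex_eq_iff)
    thus ?thesis unfolding r_def using vinner_self_nonneg(1)[of w] by simp
  qed
  have ww: "vinner w w = of_real (r^2)" unfolding r_def
    using vinner_self_nonneg[of w] by (simp add: complex_eq_iff)
  define u where "u = (1 / of_real r) \<cdot>\<^sub>v w"
  have uc: "u \<in> carrier_vec n" using wc by (simp add: u_def)
  have uS: "u \<in> S" using S wS by (simp add: u_def subspace_vec_def)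
  have Cu: "(\<Sum>i<n. cnj (C $$ (i,c)) * u $ i) = 0" if c: "c < j" for c
  proof -
    have "(adj C *\<^sub>v w) $ c = (\<Sum>i<n. cnj (C $$ (i,c)) * w $ i)"
      using C wc c by (simp add: scalar_prod_def row_def atLeast0LessThan)
    hence "(\<Sum>i<n. cnj (C $$ (i,c)) * w $ i) = 0" using Cw c by simp
    hence "(1 / of_real r) * (\<Sum>i<n. cnj (C $$ (i,c)) * w $ i) = 0" by simp
    thus "(\<Sum>i<n. cnj (C $$ (i,c)) * u $ i) = 0"
      using wc by (simp add: u_def sum_distrib_left algebra_simps)
  qed
  have uu: "(\<Sum>i<n. cnj (u $ i) * u $ i) = 1"
  proof -
    have "(\<Sum>i<n. cnj (u $ i) * u $ i) = (1 / of_real r)^2 * (\<Sum>i<n. cnj (w $ i) * w $ i)"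
      using wc by (simp add: u_def sum_distrib_left power2_eq_square algebra_simps)
    also have "(\<Sum>i<n. cnj (w $ i) * w $ i) = of_real (r^2)" using ww wc by (simp add: vinner_def)
    finally show ?thesis using rpos by (simp add: power2_eq_square)
  qed
  define C' where "C' = mat n (Suc j) (\<lambda>(i,c). if c < j then C $$ (i,c) else u $ i)"
  have C'c: "C' \<in> carrier_mat n (Suc j)" by (simp add: C'_def)
  have "adj C' * C' = 1\<^sub>m (Suc j)"
  proof (rule eq_matI)
    fix a b assume ab: "a < dim_row (1\<^sub>m (Suc j))" "b < dim_col (1\<^sub>m (Suc j))"
    have e: "(adj C' * C') $$ (a,b) = (\<Sum>i<n. cnj (C' $$ (i,a)) * C' $$ (i,b))"
      using ab C'c by (intro adj_mult_index) auto
    show "(adj C' * C') $$ (a,b) = 1\<^sub>m (Suc j) $$ (a,b)"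
    proof (cases "a < j")
      case True note a = this
      show ?thesis
      proof (cases "b < j")
        case True
        have "(\<Sum>i<n. cnj (C' $$ (i,a)) * C' $$ (i,b)) = (\<Sum>i<n. cnj (C $$ (i,a)) * C $$ (i,b))"
          using a True by (intro sum.cong refl) (auto simp: C'_def)
        also have "\<dots> = (adj C * C) $$ (a,b)" using a True C by (intro adj_mult_index[symmetric]) auto
        finally show ?thesis using e a True CC by simp
      next
        case False
        hence b: "b = j" using ab by simp
        have "(\<Sum>i<n. cnj (C' $$ (i,a)) * C' $$ (i,b)) = (\<Sum>i<n. cnj (C $$ (i,a)) * u $ i)"
          using a b by (intro sum.cong refl) (auto simp: C'_def)
        thus ?thesis using e a b Cu by simp
      qed
    next
      case False
      hence a: "a = j" using ab by simp
      show ?thesis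
      proof (cases "b < j")
        case True
        have "(\<Sum>i<n. cnj (C' $$ (i,a)) * C' $$ (i,b)) = (\<Sum>i<n. cnj (cnj (C $$ (i,b)) * u $ i))"
          using a True by (intro sum.cong refl) (auto simp: C'_def mult.commute)
        also have "\<dots> = cnj (\<Sum>i<n. cnj (C $$ (i,b)) * u $ i)" by simp
        finally show ?thesis using e a True Cu by simp
      next
        case False
        hence b: "b = j" using ab by simp
        have "(\<Sum>i<n. cnj (C' $$ (i,a)) * C' $$ (i,b)) = (\<Sum>i<n. cnj (u $ i) * u $ i)"
          using a b by (intro sum.cong refl) (auto simp: C'_def)
        thus ?thesis using e a b uu by simp
      qed
    qed
  qed (auto simp: C'_def)
  moreover have "range_in C' (Suc j) S"
    unfolding range_in_def
  proof
    fix x :: "complex vec" assume x: "x \<in> carrier_vec (Suc j)"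
    define x' where "x' = vec j (\<lambda>c. x $ c)"
    have x'c: "x' \<in> carrier_vec j" by (simp add: x'_def)
    have "C' *\<^sub>v x = 1 \<cdot>\<^sub>v (C *\<^sub>v x') + (x $ j) \<cdot>\<^sub>v u"
    proof (rule eq_vecI)
      fix i assume i: "i < dim_vec (1 \<cdot>\<^sub>v (C *\<^sub>v x') + (x $ j) \<cdot>\<^sub>v u)"
      hence i': "i < n" using uc by simp
      have "(C' *\<^sub>v x) $ i = (\<Sum>c<Suc j. C' $$ (i,c) * x $ c)"
        using i' x C'c by (simp add: scalar_prod_def row_def atLeast0LessThan)
      also have "\<dots> = (\<Sum>c<j. C $$ (i,c) * x $ c) + u $ i * x $ j"
        using i' by (simp add: C'_def)
      also have "(\<Sum>c<j. C $$ (i,c) * x $ c) = (C *\<^sub>v x') $ i"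
        using i' C by (simp add: scalar_prod_def row_def atLeast0LessThan x'_def)
      finally show "(C' *\<^sub>v x) $ i = (1 \<cdot>\<^sub>v (C *\<^sub>v x') + (x $ j) \<cdot>\<^sub>v u) $ i"
        using i' uc C x'c by (simp add: mult.commute)
    qed (use uc C x'c C'c in auto)
    moreover have "C *\<^sub>v x' \<in> S" using R x'c by (simp add: range_in_def)
    ultimately show "C' *\<^sub>v x \<in> S" using subspace_lincomb[OF S _ uS, of "C *\<^sub>v x'" 1 "x $ j"] by simp
  qed
  ultimately show ?thesis using C'c by blast
qed

lemma orthonormal_basis:
  assumes S: "subspace_vec n S"
  shows "\<exists>j C. C \<in> carrier_mat n j \<and> adj C * C = 1\<^sub>m j \<and> range_in C j S \<and> j \<le> n \<and>
     (\<forall>v\<in>S. \<exists>x\<in>carrier_vec j. v = C *\<^sub>v x)"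
proof -
  define Q where "Q = {j. \<exists>C. C \<in> carrier_mat n j \<and> adj C * C = 1\<^sub>m j \<and> range_in C j S}"
  have Qb: "Q \<subseteq> {..n}" unfolding Q_def using isometry_le by auto
  have "0 \<in> Q" unfolding Q_def range_in_def
  proof (intro CollectI exI conjI)
    show "0\<^sub>m n 0 \<in> carrier_mat n 0" by simp
    show "adj (0\<^sub>m n 0) * 0\<^sub>m n 0 = 1\<^sub>m 0" by (rule eq_matI) auto
    show "\<forall>x\<in>carrier_vec 0. 0\<^sub>m n 0 *\<^sub>v x \<in> S"
    proof
      fix x :: "complex vec" assume x0: "x \<in> carrier_vec 0"
      have "0\<^sub>m n 0 *\<^sub>v x = 0\<^sub>v n" by (rule eq_vecI) (use x0 in \<open>auto simp: scalar_prod_def\<close>)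
      thus "0\<^sub>m n 0 *\<^sub>v x \<in> S" using S by (simp add: subspace_vec_def)
    qed
  qed
  hence Qne: "Q \<noteq> {}" by blast
  have finQ: "finite Q" using Qb finite_subset by blast
  define j where "j = Max Q"
  have jQ: "j \<in> Q" unfolding j_def using finQ Qne by (rule Max_in)
  then obtain C where C: "C \<in> carrier_mat n j" "adj C * C = 1\<^sub>m j" "range_in C j S" unfolding Q_def by blast
  have "\<forall>v\<in>S. \<exists>x\<in>carrier_vec j. v = C *\<^sub>v x"
  proof (rule ccontr)
    assume "\<not> (\<forall>v\<in>S. \<exists>x\<in>carrier_vec j. v = C *\<^sub>v x)"
    then obtain v where "v \<in> S" "\<forall>x\<in>carrier_vec j. v \<noteq> C *\<^sub>v x" by blast
    from extend_isometry[OF S C this] have "Suc j \<in> Q" unfolding Q_def by blast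
    hence "Suc j \<le> j" unfolding j_def by (rule Max_ge[OF finQ])
    thus False by simp
  qed
  moreover have "j \<le> n" using jQ Qb by auto
  ultimately show ?thesis using C by blast
qed

lemma sum_split_div:
  fixes f :: "nat \<Rightarrow> 'a::comm_monoid_add"
  shows "(\<Sum>i<n*M. f i) = (\<Sum>w<n. \<Sum>a<M. f (w*M + a))"
proof (induction n)
  case 0 then show ?case by simp
next
  case (Suc n)
  have split: "{..<Suc n * M} = {..<n*M} \<union> {n*M..<n*M+M}" by auto
  have "(\<Sum>i\<in>{n*M..<n*M+M}. f i) = (\<Sum>a<M. f (n*M + a))"
  proof -
    have "{n*M..<n*M+M} = {0+n*M..<M+n*M}" by (simp add: add.commute)
    thus ?thesis by (simp only: sum.shift_bounds_nat_ivl lessThan_atLeast0 add.commute)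
  qed
  moreover have "(\<Sum>i<Suc n*M. f i) = (\<Sum>i<n*M. f i) + (\<Sum>i\<in>{n*M..<n*M+M}. f i)"
    unfolding split by (rule sum.union_disjoint) auto
  ultimately show ?case using Suc by simp
qed

lemma sum_mod_select2:
  fixes g :: "nat \<Rightarrow> 'a::comm_monoid_add"
  assumes "c < N"
  shows "(\<Sum>k<m*N. if k mod N = c then g k else 0) = (\<Sum>r<m. g (r*N + c))"
proof -
  have "(\<Sum>k<m*N. if k mod N = c then g k else 0) = (\<Sum>r<m. \<Sum>a<N. if (r*N + a) mod N = c then g (r*N+a) else 0)"
    by (rule sum_split_div)
  also have "\<dots> = (\<Sum>r<m. \<Sum>a<N. if a = c then g (r*N+c) else 0)"
    by (intro sum.cong refl) auto
  also have "\<dots> = (\<Sum>r<m. g (r*N + c))" using assms by simp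
  finally show ?thesis .
qed

lemma tensor_mult_index:
  assumes A: "A \<in> carrier_mat q q" and X: "X \<in> carrier_mat (q*M) c" and i: "i < q*M" and j: "j < c"
  shows "(tensor_id A M * X) $$ (i,j) = (\<Sum>r<q. A $$ (i div M, r) * X $$ (r*M + i mod M, j))"
proof -
  have Mpos: "M > 0" using i by (cases M) auto
  have idiv: "i div M < q" using i by (simp add: less_mult_imp_div_less)
  have "(tensor_id A M * X) $$ (i,j) = (\<Sum>k<q*M. (if i mod M = k mod M then A $$ (i div M, k div M) else 0) * X $$ (k,j))"
    using A X i j by (simp add: scalar_prod_def row_def col_def atLeast0LessThan)
  also have "\<dots> = (\<Sum>k<q*M. if k mod M = i mod M then A $$ (i div M, k div M) * X $$ (k,j) else 0)"
    by (intro sum.cong refl) auto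
  also have "\<dots> = (\<Sum>r<q. A $$ (i div M, (r*M + i mod M) div M) * X $$ (r*M + i mod M, j))"
    using Mpos by (intro sum_mod_select2) auto
  also have "\<dots> = (\<Sum>r<q. A $$ (i div M, r) * X $$ (r*M + i mod M, j))"
    using Mpos by (intro sum.cong refl) auto
  finally show ?thesis .
qed

definition stack :: "nat \<Rightarrow> nat \<Rightarrow> nat \<Rightarrow> complex mat \<Rightarrow> complex mat \<Rightarrow> complex mat" where
  "stack q Ma Mb Ja Jb = mat (q*(Ma+Mb)) (dim_col Ja) (\<lambda>(i,j).
     if i mod (Ma+Mb) < Ma then Ja $$ ((i div (Ma+Mb))*Ma + i mod (Ma+Mb), j)
     else Jb $$ ((i div (Ma+Mb))*Mb + (i mod (Ma+Mb) - Ma), j))"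

lemma stack_carrier: "Ja \<in> carrier_mat (q*Ma) p \<Longrightarrow> stack q Ma Mb Ja Jb \<in> carrier_mat (q*(Ma+Mb)) p"
  by (simp add: stack_def)

lemma stack_index_a: assumes "w < q" "a < Ma" "j < dim_col Ja"
  shows "stack q Ma Mb Ja Jb $$ (w*(Ma+Mb) + a, j) = Ja $$ (w*Ma + a, j)"
proof -
  have "w*(Ma+Mb) + a < q*(Ma+Mb)"
  proof -
    have "w*(Ma+Mb) + a < w*(Ma+Mb) + (Ma+Mb)" using assms by simp
    also have "\<dots> = Suc w * (Ma+Mb)" by simp
    also have "\<dots> \<le> q*(Ma+Mb)" using assms by (intro mult_le_mono1) auto
    finally show ?thesis .
  qed
  moreover have "(w*(Ma+Mb) + a) mod (Ma+Mb) = a" "(w*(Ma+Mb) + a) div (Ma+Mb) = w" using assms by auto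
  ultimately show ?thesis using assms by (simp add: stack_def)
qed

lemma stack_index_b: assumes "w < q" "b < Mb" "j < dim_col Ja"
  shows "stack q Ma Mb Ja Jb $$ (w*(Ma+Mb) + (Ma + b), j) = Jb $$ (w*Mb + b, j)"
proof -
  have "w*(Ma+Mb) + (Ma + b) < q*(Ma+Mb)"
  proof -
    have "w*(Ma+Mb) + (Ma+b) < w*(Ma+Mb) + (Ma+Mb)" using assms by simp
    also have "\<dots> = Suc w * (Ma+Mb)" by simp
    also have "\<dots> \<le> q*(Ma+Mb)" using assms by (intro mult_le_mono1) auto
    finally show ?thesis .
  qed
  moreover have "(w*(Ma+Mb) + (Ma + b)) mod (Ma+Mb) = Ma + b" "(w*(Ma+Mb) + (Ma+b)) div (Ma+Mb) = w" using assms by auto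
  ultimately show ?thesis using assms by (simp add: stack_def)
qed

lemma sum_split_add:
  fixes f :: "nat \<Rightarrow> 'a::comm_monoid_add"
  shows "(\<Sum>a<Ma+Mb. f a) = (\<Sum>a<Ma. f a) + (\<Sum>b<Mb. f (Ma + b))"
proof -
  have "{..<Ma+Mb} = {..<Ma} \<union> {Ma..<Ma+Mb}" by auto
  hence "(\<Sum>a<Ma+Mb. f a) = (\<Sum>a<Ma. f a) + (\<Sum>a\<in>{Ma..<Ma+Mb}. f a)"
    by (metis finite_lessThan finite_atLeastLessThan ivl_disj_int_one(2) sum.union_disjoint)
  moreover have "(\<Sum>a\<in>{Ma..<Ma+Mb}. f a) = (\<Sum>b<Mb. f (Ma + b))"
  proof -
    have "{Ma..<Ma+Mb} = {0+Ma..<Mb+Ma}" by (simp add: add.commute)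
    moreover have "sum f {0+Ma..<Mb+Ma} = sum (\<lambda>i. f (i+Ma)) {0..<Mb}" by (rule sum.shift_bounds_nat_ivl)
    ultimately show ?thesis by (simp add: lessThan_atLeast0 add.commute)
  qed
  ultimately show ?thesis by simp
qed

lemma stack_adj:
  assumes Ja: "Ja \<in> carrier_mat (q*Ma) p" and Jb: "Jb \<in> carrier_mat (q*Mb) p"
  shows "adj (stack q Ma Mb Ja Jb) * stack q Ma Mb Ja Jb = adj Ja * Ja + adj Jb * Jb"
proof (rule eq_matI)
  fix j j' assume jj: "j < dim_row (adj Ja * Ja + adj Jb * Jb)" "j' < dim_col (adj Ja * Ja + adj Jb * Jb)"
  hence j: "j < p" and j': "j' < p" using Ja Jb by auto
  let ?S = "stack q Ma Mb Ja Jb"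
  have Sc: "?S \<in> carrier_mat (q*(Ma+Mb)) p" by (rule stack_carrier[OF Ja])
  have "(adj ?S * ?S) $$ (j,j') = (\<Sum>i<q*(Ma+Mb). cnj (?S $$ (i,j)) * ?S $$ (i,j'))"
    using Sc j j' by (intro adj_mult_index) auto
  also have "\<dots> = (\<Sum>w<q. \<Sum>a<Ma+Mb. cnj (?S $$ (w*(Ma+Mb)+a,j)) * ?S $$ (w*(Ma+Mb)+a,j'))"
    by (rule sum_split_div)
  also have "\<dots> = (\<Sum>w<q. (\<Sum>a<Ma. cnj (Ja $$ (w*Ma+a,j)) * Ja $$ (w*Ma+a,j'))
                       + (\<Sum>b<Mb. cnj (Jb $$ (w*Mb+b,j)) * Jb $$ (w*Mb+b,j')))"
  proof (intro sum.cong refl)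
    fix w assume w: "w \<in> {..<q}"
    show "(\<Sum>a<Ma+Mb. cnj (?S $$ (w*(Ma+Mb)+a,j)) * ?S $$ (w*(Ma+Mb)+a,j')) =
      (\<Sum>a<Ma. cnj (Ja $$ (w*Ma+a,j)) * Ja $$ (w*Ma+a,j')) + (\<Sum>b<Mb. cnj (Jb $$ (w*Mb+b,j)) * Jb $$ (w*Mb+b,j'))"
      unfolding sum_split_add
      using w j j' Ja by (simp add: stack_index_a stack_index_b)
  qed
  also have "\<dots> = (\<Sum>i<q*Ma. cnj (Ja $$ (i,j)) * Ja $$ (i,j')) + (\<Sum>i<q*Mb. cnj (Jb $$ (i,j)) * Jb $$ (i,j'))"
    by (simp add: sum.distrib sum_split_div)
  also have "\<dots> = (adj Ja * Ja + adj Jb * Jb) $$ (j,j')"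
  proof -
    have "(adj Ja * Ja + adj Jb * Jb) $$ (j,j') = (adj Ja * Ja) $$ (j,j') + (adj Jb * Jb) $$ (j,j')"
      using Ja Jb j j' by (intro index_add_mat(1)) auto
    thus ?thesis using adj_mult_index[OF Ja Ja j j'] adj_mult_index[OF Jb Jb j j'] by simp
  qed
  finally show "(adj ?S * ?S) $$ (j,j') = (adj Ja * Ja + adj Jb * Jb) $$ (j,j')" .
qed (use Ja Jb in \<open>auto simp: stack_def\<close>)

lemma div_mod_decomp_lt: fixes i q M :: nat assumes "i < q * M" shows "i div M < q" "i mod M < M" "i = (i div M) * M + i mod M"
proof -
  have Mpos: "M > 0" using assms by (cases M) auto
  show "i div M < q" using assms by (simp add: less_mult_imp_div_less)
  show "i mod M < M" using Mpos by simp
  show "i = (i div M) * M + i mod M" by simp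
qed

lemma stack_inter:
  assumes Ja: "Ja \<in> carrier_mat (q*Ma) p" and Jb: "Jb \<in> carrier_mat (q*Mb) p"
    and A: "A \<in> carrier_mat q q" and B: "B \<in> carrier_mat p p"
    and ia: "tensor_id A Ma * Ja = Ja * B" and ib: "tensor_id A Mb * Jb = Jb * B"
  shows "tensor_id A (Ma+Mb) * stack q Ma Mb Ja Jb = stack q Ma Mb Ja Jb * B"
proof (rule eq_matI)
  let ?S = "stack q Ma Mb Ja Jb"
  let ?M = "Ma + Mb"
  have Sc: "?S \<in> carrier_mat (q*?M) p" by (rule stack_carrier[OF Ja])
  fix i j assume ij: "i < dim_row (?S * B)" "j < dim_col (?S * B)"
  hence i: "i < q * ?M" and j: "j < p" using Sc B by auto
  define w where "w = i div ?M"
  define a where "a = i mod ?M"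
  have w: "w < q" and a: "a < ?M" and iwa: "i = w * ?M + a" using div_mod_decomp_lt[OF i] by (auto simp: w_def a_def)
  have "(tensor_id A ?M * ?S) $$ (i,j) = (\<Sum>r<q. A $$ (w, r) * ?S $$ (r*?M + a, j))"
    unfolding w_def a_def by (rule tensor_mult_index[OF A Sc i j])
  also have "\<dots> = (?S * B) $$ (i,j)"
  proof (cases "a < Ma")
    case True
    have Mapos: "Ma > 0" using True by simp
    have i': "w*Ma + a < q*Ma"
    proof -
      have "w*Ma + a < Suc w * Ma" using True by simp
      also have "\<dots> \<le> q*Ma" using w by (intro mult_le_mono1) auto
      finally show ?thesis .
    qed
    have "(\<Sum>r<q. A $$ (w, r) * ?S $$ (r*?M + a, j)) = (\<Sum>r<q. A $$ (w, r) * Ja $$ (r*Ma + a, j))"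
      using True j Ja by (intro sum.cong refl) (simp add: stack_index_a)
    also have "\<dots> = (tensor_id A Ma * Ja) $$ (w*Ma + a, j)"
      using tensor_mult_index[OF A Ja i' j] True Mapos by simp
    also have "\<dots> = (Ja * B) $$ (w*Ma + a, j)" unfolding ia ..
    also have "\<dots> = (\<Sum>l<p. Ja $$ (w*Ma + a, l) * B $$ (l, j))"
      using Ja B i' j by (simp add: scalar_prod_def row_def col_def atLeast0LessThan)
    also have "\<dots> = (\<Sum>l<p. ?S $$ (i, l) * B $$ (l, j))"
      using iwa w True Ja by (intro sum.cong refl) (simp add: stack_index_a)
    also have "\<dots> = (?S * B) $$ (i,j)"
      using Sc B i j by (simp add: scalar_prod_def row_def col_def atLeast0LessThan)
    finally show ?thesis .
  next
    case False
    define b where "b = a - Ma"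
    have b: "b < Mb" and ab: "a = Ma + b" using False a by (auto simp: b_def)
    have Mbpos: "Mb > 0" using b by simp
    have i': "w*Mb + b < q*Mb"
    proof -
      have "w*Mb + b < Suc w * Mb" using b by simp
      also have "\<dots> \<le> q*Mb" using w by (intro mult_le_mono1) auto
      finally show ?thesis .
    qed
    have "(\<Sum>r<q. A $$ (w, r) * ?S $$ (r*?M + a, j)) = (\<Sum>r<q. A $$ (w, r) * Jb $$ (r*Mb + b, j))"
      using b ab j Ja by (intro sum.cong refl) (simp add: stack_index_b)
    also have "\<dots> = (tensor_id A Mb * Jb) $$ (w*Mb + b, j)"
      using tensor_mult_index[OF A Jb i' j] b Mbpos by simp
    also have "\<dots> = (Jb * B) $$ (w*Mb + b, j)" unfolding ib ..
    also have "\<dots> = (\<Sum>l<p. Jb $$ (w*Mb + b, l) * B $$ (l, j))"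
      using Jb B i' j by (simp add: scalar_prod_def row_def col_def atLeast0LessThan)
    also have "\<dots> = (\<Sum>l<p. ?S $$ (i, l) * B $$ (l, j))"
      using iwa w b ab Ja by (intro sum.cong refl) (simp add: stack_index_b)
    also have "\<dots> = (?S * B) $$ (i,j)"
      using Sc B i j by (simp add: scalar_prod_def row_def col_def atLeast0LessThan)
    finally show ?thesis .
  qed
  finally show "(tensor_id A ?M * ?S) $$ (i,j) = (?S * B) $$ (i,j)" .
qed (use Ja B A in \<open>auto simp: stack_def\<close>)

lemma mtrace_mult_comm: assumes A: "A \<in> carrier_mat n m" and B: "B \<in> carrier_mat m n"
  shows "mtrace (A * B) = mtrace (B * A)"
proof -
  have "mtrace (A * B) = (\<Sum>i<n. \<Sum>k<m. A $$ (i,k) * B $$ (k,i))"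
    unfolding mtrace_def using A B by (intro sum.cong refl) (auto simp: scalar_prod_def row_def col_def atLeast0LessThan)
  also have "\<dots> = (\<Sum>k<m. \<Sum>i<n. B $$ (k,i) * A $$ (i,k))"
    by (subst sum.swap) (simp add: mult.commute)
  also have "\<dots> = mtrace (B * A)"
    unfolding mtrace_def using A B by (intro sum.cong refl) (auto simp: scalar_prod_def row_def col_def atLeast0LessThan)
  finally show ?thesis .
qed

lemma mtrace_add: assumes A: "A \<in> carrier_mat n n" and B: "B \<in> carrier_mat n n"
  shows "mtrace (A + B) = mtrace A + mtrace B"
  unfolding mtrace_def using A B by (simp add: sum.distrib)

lemma mtrace_one: "mtrace (1\<^sub>m n) = of_nat n"
  unfolding mtrace_def by simp

lemma mtrace_isometry: assumes B: "B \<in> carrier_mat p k" and BB: "adj B * B = 1\<^sub>m k"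
  shows "mtrace (B * adj B) = of_nat k"
  using mtrace_mult_comm[OF B adj_carrier[OF B]] BB by (simp add: mtrace_one)

lemma mtrace_adj: "A \<in> carrier_mat n n \<Longrightarrow> mtrace (adj A) = cnj (mtrace A)"
  unfolding mtrace_def by simp

locale fgrp = group G for G :: "('g,'b) monoid_scheme" (structure) +
  assumes fin: "finite (carrier G)"
begin

lemma urep_carrier: "unitary_rep G p \<sigma> \<Longrightarrow> g \<in> carrier G \<Longrightarrow> \<sigma> g \<in> carrier_mat p p"
  by (simp add: unitary_rep_def rep_def)

lemma urep_mult: "unitary_rep G p \<sigma> \<Longrightarrow> g \<in> carrier G \<Longrightarrow> h \<in> carrier G \<Longrightarrow> \<sigma> (g \<otimes> h) = \<sigma> g * \<sigma> h"
  by (simp add: unitary_rep_def rep_def)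

lemma urep_unitary: "unitary_rep G p \<sigma> \<Longrightarrow> g \<in> carrier G \<Longrightarrow> adj (\<sigma> g) * \<sigma> g = 1\<^sub>m p \<and> \<sigma> g * adj (\<sigma> g) = 1\<^sub>m p"
  by (simp add: unitary_rep_def unitary_mat_def)

lemma urep_one: "unitary_rep G p \<sigma> \<Longrightarrow> \<sigma> \<one> = 1\<^sub>m p"
  by (simp add: unitary_rep_def rep_def)

lemma urep_inv: assumes s: "unitary_rep G p \<sigma>" and g: "g \<in> carrier G"
  shows "\<sigma> (inv g) = adj (\<sigma> g)"
proof -
  have c: "\<sigma> g \<in> carrier_mat p p" "\<sigma> (inv g) \<in> carrier_mat p p" using urep_carrier[OF s] g by auto
  have "\<sigma> g * \<sigma> (inv g) = 1\<^sub>m p" using urep_mult[OF s g] urep_one[OF s] g by (simp flip: urep_mult[OF s])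
  hence "adj (\<sigma> g) * (\<sigma> g * \<sigma> (inv g)) = adj (\<sigma> g)" using c by simp
  moreover have "adj (\<sigma> g) * (\<sigma> g * \<sigma> (inv g)) = (adj (\<sigma> g) * \<sigma> g) * \<sigma> (inv g)"
    using c by (simp add: assoc_mult_mat[OF adj_carrier[OF c(1)] c(1) c(2)])
  ultimately show ?thesis using urep_unitary[OF s g] c by simp
qed

lemma sum_reindex_mult: assumes c: "c \<in> carrier G"
  shows "(\<Sum>h\<in>carrier G. F (c \<otimes> h)) = (\<Sum>h\<in>carrier G. (F h :: 'z::comm_monoid_add))"
proof -
  have "(\<Sum>h\<in>(\<lambda>x. c \<otimes> x) ` carrier G. F h) = (\<Sum>h\<in>carrier G. F (c \<otimes> h))"
    by (rule sum.reindex[OF inj_on_cmult[OF c], unfolded comp_def])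
  thus ?thesis using surj_const_mult[OF c] by simp
qed

definition av :: "('g \<Rightarrow> complex mat) \<Rightarrow> ('g \<Rightarrow> complex mat) \<Rightarrow> nat \<Rightarrow> nat \<Rightarrow> nat \<Rightarrow> nat \<Rightarrow> complex" where
  "av \<tau> \<sigma> k l i j = (\<Sum>g\<in>carrier G. \<tau> g $$ (i,k) * \<sigma> (inv g) $$ (l,j))"

lemma frob_trace: assumes A: "A \<in> carrier_mat n n" and B: "B \<in> carrier_mat n n"
  shows "(\<Sum>k<n. \<Sum>i<n. cnj (A $$ (i,k)) * B $$ (i,k)) = mtrace (adj A * B)"
proof -
  have "mtrace (adj A * B) = (\<Sum>k<n. (adj A * B) $$ (k,k))" using A B by (simp add: mtrace_def)
  also have "\<dots> = (\<Sum>k<n. \<Sum>i<n. cnj (A $$ (i,k)) * B $$ (i,k))"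
    by (intro sum.cong refl) (simp add: adj_mult_index[OF A B])
  finally show ?thesis by simp
qed

lemma frob_trace': assumes A: "A \<in> carrier_mat n n" and B: "B \<in> carrier_mat n n"
  shows "(\<Sum>l<n. \<Sum>j<n. cnj (A $$ (l,j)) * B $$ (l,j)) = mtrace (adj A * B)"
  using frob_trace[OF A B] by (subst sum.swap) simp

lemma char_av:
  assumes t: "unitary_rep G q \<tau>" and s: "unitary_rep G p \<sigma>"
  shows "of_nat (card (carrier G)) * (\<Sum>u\<in>carrier G. mtrace (\<tau> u) * cnj (mtrace (\<sigma> u)))
       = (\<Sum>k<q. \<Sum>l<p. \<Sum>i<q. \<Sum>j<p. cnj (av \<tau> \<sigma> k l i j) * av \<tau> \<sigma> k l i j)"
proof -
  define F where "F u = mtrace (\<tau> u) * cnj (mtrace (\<sigma> u))" for u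
  define c where "c g h k l i j = (cnj (\<tau> g $$ (i,k)) * \<tau> h $$ (i,k)) * (cnj (\<sigma> (inv g) $$ (l,j)) * \<sigma> (inv h) $$ (l,j))"
    for g h k l i j
  have 1: "cnj (av \<tau> \<sigma> k l i j) * av \<tau> \<sigma> k l i j = (\<Sum>gh\<in>carrier G \<times> carrier G. c (fst gh) (snd gh) k l i j)"
    for k l i j
  proof -
    have "cnj (av \<tau> \<sigma> k l i j) * av \<tau> \<sigma> k l i j
       = (\<Sum>g\<in>carrier G. \<Sum>h\<in>carrier G. cnj (\<tau> g $$ (i,k) * \<sigma> (inv g) $$ (l,j)) * (\<tau> h $$ (i,k) * \<sigma> (inv h) $$ (l,j)))"
      unfolding av_def cnj_sum sum_product ..
    also have "\<dots> = (\<Sum>g\<in>carrier G. \<Sum>h\<in>carrier G. c g h k l i j)"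
      unfolding c_def by (simp add: algebra_simps)
    also have "\<dots> = (\<Sum>gh\<in>carrier G \<times> carrier G. c (fst gh) (snd gh) k l i j)"
      by (simp add: sum.cartesian_product split_def)
    finally show ?thesis .
  qed
  have 2: "(\<Sum>k<q. \<Sum>l<p. \<Sum>i<q. \<Sum>j<p. \<Sum>gh\<in>carrier G \<times> carrier G. c (fst gh) (snd gh) k l i j)
      = (\<Sum>gh\<in>carrier G \<times> carrier G. \<Sum>k<q. \<Sum>l<p. \<Sum>i<q. \<Sum>j<p. c (fst gh) (snd gh) k l i j)"
    by (simp only: sum.swap[of _ "{..<p}" "carrier G \<times> carrier G"] sum.swap[of _ "{..<q}" "carrier G \<times> carrier G"])
  have 3: "(\<Sum>k<q. \<Sum>l<p. \<Sum>i<q. \<Sum>j<p. c g h k l i j) = F (inv g \<otimes> h)"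
    if g: "g \<in> carrier G" and h: "h \<in> carrier G" for g h
  proof -
    have "(\<Sum>k<q. \<Sum>l<p. \<Sum>i<q. \<Sum>j<p. c g h k l i j)
        = (\<Sum>k<q. \<Sum>l<p. (\<Sum>i<q. cnj (\<tau> g $$ (i,k)) * \<tau> h $$ (i,k)) * (\<Sum>j<p. cnj (\<sigma> (inv g) $$ (l,j)) * \<sigma> (inv h) $$ (l,j)))"
      unfolding c_def sum_product ..
    also have "\<dots> = (\<Sum>k<q. \<Sum>i<q. cnj (\<tau> g $$ (i,k)) * \<tau> h $$ (i,k)) * (\<Sum>l<p. \<Sum>j<p. cnj (\<sigma> (inv g) $$ (l,j)) * \<sigma> (inv h) $$ (l,j))"
      by (simp add: sum_product)
    also have "(\<Sum>k<q. \<Sum>i<q. cnj (\<tau> g $$ (i,k)) * \<tau> h $$ (i,k)) = mtrace (adj (\<tau> g) * \<tau> h)"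
      using g h urep_carrier[OF t] by (intro frob_trace) auto
    also have "adj (\<tau> g) * \<tau> h = \<tau> (inv g \<otimes> h)"
      using g h by (simp add: urep_inv[OF t] urep_mult[OF t])
    also have "(\<Sum>l<p. \<Sum>j<p. cnj (\<sigma> (inv g) $$ (l,j)) * \<sigma> (inv h) $$ (l,j)) = mtrace (adj (\<sigma> (inv g)) * \<sigma> (inv h))"
      using g h urep_carrier[OF s] by (intro frob_trace') auto
    also have "adj (\<sigma> (inv g)) * \<sigma> (inv h) = \<sigma> g * \<sigma> (inv h)"
      using g h by (simp add: urep_inv[OF s])
    also have "mtrace (\<sigma> g * \<sigma> (inv h)) = mtrace (\<sigma> (inv h) * \<sigma> g)"
      by (rule mtrace_mult_comm[OF urep_carrier[OF s g] urep_carrier[OF s inv_closed[OF h]]])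
    also have "\<sigma> (inv h) * \<sigma> g = adj (\<sigma> (inv g \<otimes> h))"
    proof -
      have "adj (\<sigma> (inv g \<otimes> h)) = \<sigma> (inv (inv g \<otimes> h))"
        using g h by (intro urep_inv[OF s, symmetric]) auto
      also have "inv (inv g \<otimes> h) = inv h \<otimes> g" using g h by (simp add: inv_mult_group)
      also have "\<sigma> (inv h \<otimes> g) = \<sigma> (inv h) * \<sigma> g" using g h by (intro urep_mult[OF s]) auto
      finally show ?thesis by simp
    qed
    also have "mtrace (adj (\<sigma> (inv g \<otimes> h))) = cnj (mtrace (\<sigma> (inv g \<otimes> h)))"
      using g h by (intro mtrace_adj[of _ p] urep_carrier[OF s]) auto
    finally show ?thesis unfolding F_def .
  qed
  have "(\<Sum>k<q. \<Sum>l<p. \<Sum>i<q. \<Sum>j<p. cnj (av \<tau> \<sigma> k l i j) * av \<tau> \<sigma> k l i j)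
      = (\<Sum>gh\<in>carrier G \<times> carrier G. F (inv (fst gh) \<otimes> snd gh))"
    unfolding 1 2 using 3 by (intro sum.cong refl) auto
  also have "\<dots> = (\<Sum>g\<in>carrier G. \<Sum>h\<in>carrier G. F (inv g \<otimes> h))"
    by (simp add: sum.cartesian_product split_def)
  also have "\<dots> = (\<Sum>g\<in>carrier G. \<Sum>h\<in>carrier G. F h)"
    by (intro sum.cong refl sum_reindex_mult) auto
  also have "\<dots> = of_nat (card (carrier G)) * (\<Sum>u\<in>carrier G. F u)" by simp
  finally show ?thesis unfolding F_def by simp
qed

end

lemma entry_triple:
  assumes A: "A \<in> carrier_mat n m" and B: "B \<in> carrier_mat m r" and C: "C \<in> carrier_mat r s"
    and i: "i < n" and j: "j < s"
  shows "(A * B * C) $$ (i,j) = (\<Sum>a<m. \<Sum>b<r. A $$ (i,a) * B $$ (a,b) * C $$ (b,j))"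
proof -
  have "(A * B * C) $$ (i,j) = (\<Sum>b<r. (A * B) $$ (i,b) * C $$ (b,j))"
    using A B C i j by (simp add: scalar_prod_def row_def col_def atLeast0LessThan del: assoc_mult_mat)
  also have "\<dots> = (\<Sum>b<r. (\<Sum>a<m. A $$ (i,a) * B $$ (a,b)) * C $$ (b,j))"
    using A B C i j by (intro sum.cong refl) (simp add: scalar_prod_def row_def col_def atLeast0LessThan del: assoc_mult_mat)
  also have "\<dots> = (\<Sum>a<m. \<Sum>b<r. A $$ (i,a) * B $$ (a,b) * C $$ (b,j))"
    by (simp add: sum_distrib_right sum.swap[of _ "{..<r}"])
  finally show ?thesis .
qed

lemma sum_cnj_mult_real:
  fixes z :: "'i \<Rightarrow> complex"
  shows "(\<Sum>x\<in>A. cnj (z x) * z x) = of_real (\<Sum>x\<in>A. (cmod (z x))\<^sup>2)"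
  unfolding of_real_sum by (intro sum.cong refl) (simp only: complex_norm_square mult.commute)

lemma sum4_real:
  fixes z :: "nat \<Rightarrow> nat \<Rightarrow> nat \<Rightarrow> nat \<Rightarrow> complex"
  shows "(\<Sum>k<q. \<Sum>l<p. \<Sum>i<q'. \<Sum>j<p'. cnj (z k l i j) * z k l i j)
     = of_real (\<Sum>k<q. \<Sum>l<p. \<Sum>i<q'. \<Sum>j<p'. (cmod (z k l i j))\<^sup>2)"
  by (simp add: sum_cnj_mult_real of_real_sum)

lemma sum4_zero:
  fixes z :: "nat \<Rightarrow> nat \<Rightarrow> nat \<Rightarrow> nat \<Rightarrow> complex"
  assumes "(\<Sum>k<q. \<Sum>l<p. \<Sum>i<q'. \<Sum>j<p'. (cmod (z k l i j))\<^sup>2) = 0"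
  shows "\<forall>k<q. \<forall>l<p. \<forall>i<q'. \<forall>j<p'. z k l i j = 0"
proof (intro allI impI)
  fix k l i j assume kl: "k < q" "l < p" "i < q'" "j < p'"
  have nn: "\<And>k l i. 0 \<le> (\<Sum>j<p'. (cmod (z k l i j))\<^sup>2)" "\<And>k l. 0 \<le> (\<Sum>i<q'. \<Sum>j<p'. (cmod (z k l i j))\<^sup>2)"
     "\<And>k. 0 \<le> (\<Sum>l<p. \<Sum>i<q'. \<Sum>j<p'. (cmod (z k l i j))\<^sup>2)"
    by (auto intro!: sum_nonneg)
  from assms have "(\<Sum>l<p. \<Sum>i<q'. \<Sum>j<p'. (cmod (z k l i j))\<^sup>2) = 0"
    using kl nn by (subst (asm) sum_nonneg_eq_0_iff) auto
  hence "(\<Sum>i<q'. \<Sum>j<p'. (cmod (z k l i j))\<^sup>2) = 0"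
    using kl nn by (subst (asm) sum_nonneg_eq_0_iff) auto
  hence "(\<Sum>j<p'. (cmod (z k l i j))\<^sup>2) = 0"
    using kl nn by (subst (asm) sum_nonneg_eq_0_iff) auto
  hence "(cmod (z k l i j))\<^sup>2 = 0"
    using kl by (subst (asm) sum_nonneg_eq_0_iff) auto
  thus "z k l i j = 0" by simp
qed

context fgrp
begin

lemma char_inner_eq:
  "char_inner G (character G \<rho>) (character G \<sigma>) =
     cnj (\<Sum>u\<in>carrier G. mtrace (\<sigma> u) * cnj (mtrace (\<rho> u))) / of_nat (card (carrier G))"
  unfolding char_inner_def character_def by (simp add: mult.commute)

lemma card_pos: "card (carrier G) > 0"
  using fin one_closed by (auto simp: card_gt_0_iff)

lemma sub_char_pos:
  assumes s: "unitary_rep G p \<sigma>" and r: "unitary_rep G k \<rho>"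
    and B: "B \<in> carrier_mat p k" and BB: "adj B * B = 1\<^sub>m k" and k: "k > 0"
    and inter: "\<forall>g\<in>carrier G. \<sigma> g * B = B * \<rho> g"
  shows "Re (char_inner G (character G \<rho>) (character G \<sigma>)) > 0"
proof -
  define R where "R = (\<Sum>a<p. \<Sum>b<k. \<Sum>i<p. \<Sum>j<k. (cmod (av \<sigma> \<rho> a b i j))\<^sup>2)"
  have X: "of_nat (card (carrier G)) * (\<Sum>u\<in>carrier G. mtrace (\<sigma> u) * cnj (mtrace (\<rho> u))) = of_real R"
    unfolding char_av[OF s r] sum4_real R_def ..
  have Rnn: "R \<ge> 0" unfolding R_def by (intro sum_nonneg) auto
  have "R \<noteq> 0"
  proof
    assume "R = 0"
    hence z: "\<forall>a<p. \<forall>b<k. \<forall>i<p. \<forall>j<k. av \<sigma> \<rho> a b i j = 0" unfolding R_def by (rule sum4_zero)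
    have "B = 0\<^sub>m p k"
    proof (rule eq_matI)
      fix i j assume ij: "i < dim_row (0\<^sub>m p k)" "j < dim_col (0\<^sub>m p k)"
      hence i: "i < p" and j: "j < k" by auto
      have "(\<Sum>g\<in>carrier G. (\<sigma> g * B * \<rho> (inv g)) $$ (i,j)) = (\<Sum>g\<in>carrier G. B $$ (i,j))"
      proof (intro sum.cong refl)
        fix g assume g: "g \<in> carrier G"
        have "\<sigma> g * B * \<rho> (inv g) = B * \<rho> g * \<rho> (inv g)" using inter g by simp
        also have "\<dots> = B * (\<rho> g * \<rho> (inv g))"
          using g B urep_carrier[OF r] by (intro assoc_mult_mat[of _ p k _ k _ k]) auto
        also have "\<rho> g * \<rho> (inv g) = 1\<^sub>m k"
          using g urep_one[OF r] by (simp flip: urep_mult[OF r])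
        finally show "(\<sigma> g * B * \<rho> (inv g)) $$ (i,j) = B $$ (i,j)" using B by simp
      qed
      also have "\<dots> = of_nat (card (carrier G)) * B $$ (i,j)" by simp
      finally have e1: "(\<Sum>g\<in>carrier G. (\<sigma> g * B * \<rho> (inv g)) $$ (i,j)) = of_nat (card (carrier G)) * B $$ (i,j)" .
      have "(\<Sum>g\<in>carrier G. (\<sigma> g * B * \<rho> (inv g)) $$ (i,j))
          = (\<Sum>g\<in>carrier G. \<Sum>a<p. \<Sum>b<k. \<sigma> g $$ (i,a) * B $$ (a,b) * \<rho> (inv g) $$ (b,j))"
        using i j B urep_carrier[OF s] urep_carrier[OF r] by (intro sum.cong refl entry_triple) auto
      also have "\<dots> = (\<Sum>a<p. \<Sum>b<k. B $$ (a,b) * av \<sigma> \<rho> a b i j)"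
        unfolding av_def
        by (simp add: sum_distrib_left sum.swap[of _ "carrier G"] algebra_simps)
      also have "\<dots> = 0" using z i j by simp
      finally have "of_nat (card (carrier G)) * B $$ (i,j) = 0" using e1 by simp
      thus "B $$ (i,j) = 0\<^sub>m p k $$ (i,j)" using card_pos i j by simp
    qed (use B in auto)
    hence "adj B * B = 0\<^sub>m k k" using B by simp
    hence "(1\<^sub>m k :: complex mat) $$ (0,0) = 0\<^sub>m k k $$ (0,0)" using BB by simp
    thus False using k by simp
  qed
  hence Rpos: "R > 0" using Rnn by simp
  have S: "(\<Sum>u\<in>carrier G. mtrace (\<sigma> u) * cnj (mtrace (\<rho> u))) = of_real R / of_nat (card (carrier G))"
    using X card_pos by (simp add: field_simps)
  have "char_inner G (character G \<rho>) (character G \<sigma>) = cnj (of_real R / of_nat (card (carrier G))) / of_nat (card (carrier G))"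
    unfolding char_inner_eq S ..
  hence "Re (char_inner G (character G \<rho>) (character G \<sigma>)) = R / (real (card (carrier G)))^2"
    by (simp add: power2_eq_square)
  thus ?thesis using Rpos card_pos by simp
qed

lemma av_inter:
  fixes k0 l0 :: nat
  assumes t: "unitary_rep G q \<tau>" and r: "unitary_rep G k \<rho>" and h: "h \<in> carrier G"
  defines "S \<equiv> mat q k (\<lambda>(i,j). av \<tau> \<rho> k0 l0 i j)"
  assumes k0: "k0 < q" and l0: "l0 < k"
  shows "\<tau> h * S = S * \<rho> h"
proof (rule eq_matI)
  have Sc: "S \<in> carrier_mat q k" by (simp add: S_def)
  fix i j assume ij: "i < dim_row (S * \<rho> h)" "j < dim_col (S * \<rho> h)"
  hence i: "i < q" and j: "j < k" using urep_carrier[OF r h] by (auto simp: S_def)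
  have th: "\<tau> h \<in> carrier_mat q q" by (rule urep_carrier[OF t h])
  have rh: "\<rho> h \<in> carrier_mat k k" by (rule urep_carrier[OF r h])
  have "(\<tau> h * S) $$ (i,j) = (\<Sum>r<q. \<tau> h $$ (i,r) * av \<tau> \<rho> k0 l0 r j)"
    using th i j by (simp add: S_def scalar_prod_def row_def col_def atLeast0LessThan)
  also have "\<dots> = (\<Sum>g\<in>carrier G. (\<Sum>r<q. \<tau> h $$ (i,r) * \<tau> g $$ (r,k0)) * \<rho> (inv g) $$ (l0,j))"
    unfolding av_def by (simp add: sum_distrib_left sum_distrib_right sum.swap[of _ "carrier G"] algebra_simps)
  also have "\<dots> = (\<Sum>g\<in>carrier G. \<tau> (h \<otimes> g) $$ (i,k0) * \<rho> (inv g) $$ (l0,j))"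
  proof (intro sum.cong refl)
    fix g assume g: "g \<in> carrier G"
    have "\<tau> (h \<otimes> g) $$ (i,k0) = (\<tau> h * \<tau> g) $$ (i,k0)" using g h by (simp add: urep_mult[OF t])
    also have "\<dots> = (\<Sum>r<q. \<tau> h $$ (i,r) * \<tau> g $$ (r,k0))"
      using th urep_carrier[OF t g] i k0 by (simp add: scalar_prod_def row_def col_def atLeast0LessThan)
    finally show "(\<Sum>r<q. \<tau> h $$ (i,r) * \<tau> g $$ (r,k0)) * \<rho> (inv g) $$ (l0,j) = \<tau> (h \<otimes> g) $$ (i,k0) * \<rho> (inv g) $$ (l0,j)"
      by simp
  qed
  also have "\<dots> = (\<Sum>g\<in>carrier G. \<tau> (h \<otimes> g) $$ (i,k0) * \<rho> (inv (h \<otimes> g) \<otimes> h) $$ (l0,j))"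
  proof (intro sum.cong refl)
    fix g assume g: "g \<in> carrier G"
    have "inv (h \<otimes> g) \<otimes> h = inv g" using g h by (simp add: inv_mult_group m_assoc)
    thus "\<tau> (h \<otimes> g) $$ (i,k0) * \<rho> (inv g) $$ (l0,j) = \<tau> (h \<otimes> g) $$ (i,k0) * \<rho> (inv (h \<otimes> g) \<otimes> h) $$ (l0,j)"
      by simp
  qed
  also have "\<dots> = (\<Sum>g\<in>carrier G. \<tau> g $$ (i,k0) * \<rho> (inv g \<otimes> h) $$ (l0,j))"
    by (rule sum_reindex_mult[OF h, where F="\<lambda>g. \<tau> g $$ (i,k0) * \<rho> (inv g \<otimes> h) $$ (l0,j)"])
  also have "\<dots> = (\<Sum>g\<in>carrier G. \<tau> g $$ (i,k0) * (\<Sum>r<k. \<rho> (inv g) $$ (l0,r) * \<rho> h $$ (r,j)))"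
  proof (intro sum.cong refl)
    fix g assume g: "g \<in> carrier G"
    have "\<rho> (inv g \<otimes> h) $$ (l0,j) = (\<rho> (inv g) * \<rho> h) $$ (l0,j)" using g h by (simp add: urep_mult[OF r])
    also have "\<dots> = (\<Sum>r<k. \<rho> (inv g) $$ (l0,r) * \<rho> h $$ (r,j))"
      using rh urep_carrier[OF r inv_closed[OF g]] l0 j by (simp add: scalar_prod_def row_def col_def atLeast0LessThan)
    finally show "\<tau> g $$ (i,k0) * \<rho> (inv g \<otimes> h) $$ (l0,j) = \<tau> g $$ (i,k0) * (\<Sum>r<k. \<rho> (inv g) $$ (l0,r) * \<rho> h $$ (r,j))"
      by simp
  qed
  also have "\<dots> = (\<Sum>r<k. av \<tau> \<rho> k0 l0 i r * \<rho> h $$ (r,j))"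
    unfolding av_def by (simp add: sum_distrib_left sum_distrib_right sum.swap[of _ "carrier G"] algebra_simps)
  also have "\<dots> = (S * \<rho> h) $$ (i,j)"
    using rh i j by (simp add: S_def scalar_prod_def row_def col_def atLeast0LessThan)
  finally show "(\<tau> h * S) $$ (i,j) = (S * \<rho> h) $$ (i,j)" .
qed (use urep_carrier[OF t h] urep_carrier[OF r h] in \<open>auto simp: S_def\<close>)

lemma intertwiner_exists:
  assumes t: "unitary_rep G q \<tau>" and r: "unitary_rep G k \<rho>"
    and pos: "Re (char_inner G (character G \<rho>) (character G \<tau>)) > 0"
  shows "\<exists>S. S \<in> carrier_mat q k \<and> S \<noteq> 0\<^sub>m q k \<and> (\<forall>g\<in>carrier G. \<tau> g * S = S * \<rho> g)"
proof -
  define R where "R = (\<Sum>a<q. \<Sum>b<k. \<Sum>i<q. \<Sum>j<k. (cmod (av \<tau> \<rho> a b i j))\<^sup>2)"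
  have X: "of_nat (card (carrier G)) * (\<Sum>u\<in>carrier G. mtrace (\<tau> u) * cnj (mtrace (\<rho> u))) = of_real R"
    unfolding char_av[OF t r] sum4_real R_def ..
  have S: "(\<Sum>u\<in>carrier G. mtrace (\<tau> u) * cnj (mtrace (\<rho> u))) = of_real R / of_nat (card (carrier G))"
    using X card_pos by (simp add: field_simps)
  have "char_inner G (character G \<rho>) (character G \<tau>) = cnj (of_real R / of_nat (card (carrier G))) / of_nat (card (carrier G))"
    unfolding char_inner_eq S ..
  hence "Re (char_inner G (character G \<rho>) (character G \<tau>)) = R / (real (card (carrier G)))^2"
    by (simp add: power2_eq_square)
  hence "R \<noteq> 0" using pos by auto
  moreover have "(\<forall>a<q. \<forall>b<k. \<forall>i<q. \<forall>j<k. av \<tau> \<rho> a b i j = 0) \<Longrightarrow> R = 0"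
    unfolding R_def by (auto intro!: sum.neutral)
  ultimately have "\<not> (\<forall>a<q. \<forall>b<k. \<forall>i<q. \<forall>j<k. av \<tau> \<rho> a b i j = 0)" by blast
  then obtain k0 l0 i0 j0 where kl: "k0 < q" "l0 < k" "i0 < q" "j0 < k" and nz: "av \<tau> \<rho> k0 l0 i0 j0 \<noteq> 0"
    by blast
  define S where "S = mat q k (\<lambda>(i,j). av \<tau> \<rho> k0 l0 i j)"
  have "S \<noteq> 0\<^sub>m q k"
  proof
    assume "S = 0\<^sub>m q k"
    hence "S $$ (i0,j0) = 0" using kl by simp
    thus False using nz kl by (simp add: S_def)
  qed
  moreover have "\<forall>g\<in>carrier G. \<tau> g * S = S * \<rho> g"
    using av_inter[OF t r _ kl(1,2)] unfolding S_def by blast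
  moreover have "S \<in> carrier_mat q k" by (simp add: S_def)
  ultimately show ?thesis by blast
qed

lemma eigen_exists: assumes X: "(X :: complex mat) \<in> carrier_mat k k" and k: "k > 0"
  shows "\<exists>lam v. v \<in> carrier_vec k \<and> v \<noteq> 0\<^sub>v k \<and> X *\<^sub>v v = lam \<cdot>\<^sub>v v"
proof -
  obtain as where cp: "char_poly X = (\<Prod>a\<leftarrow>as. [:- a, 1:])" and len: "length as = k"
    using char_poly_factorized[OF X] by blast
  then obtain lam rest where as: "as = lam # rest" using k by (cases as) auto
  have "poly (char_poly X) lam = 0" unfolding cp as by simp
  hence "eigenvalue X lam" using eigenvalue_root_char_poly[OF X] by simp
  then obtain v where "eigenvector X v lam" unfolding eigenvalue_def by blast
  thus ?thesis using X unfolding eigenvector_def by auto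
qed

lemma schur_iso:
  assumes t: "unitary_rep G q \<tau>" and r: "unitary_rep G k \<rho>" and irr: "irreducible_rep G k \<rho>"
    and Sc: "S \<in> carrier_mat q k" and Snz: "S \<noteq> 0\<^sub>m q k"
    and inter: "\<forall>g\<in>carrier G. \<tau> g * S = S * \<rho> g"
  shows "\<exists>J. J \<in> carrier_mat q k \<and> adj J * J = 1\<^sub>m k \<and> (\<forall>g\<in>carrier G. \<tau> g * J = J * \<rho> g)"
proof -
  have k: "k > 0" using irr by (simp add: irreducible_rep_def)
  define X where "X = adj S * S"
  have Xc: "X \<in> carrier_mat k k" unfolding X_def using adj_carrier[OF Sc] Sc by (rule mult_carrier_mat)
  have comm: "\<rho> g * X = X * \<rho> g" if g: "g \<in> carrier G" for g
  proof -
    have rg: "\<rho> g \<in> carrier_mat k k" by (rule urep_carrier[OF r g])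
    have tg: "\<tau> g \<in> carrier_mat q q" by (rule urep_carrier[OF t g])
    have ig: "inv g \<in> carrier G" using g by simp
    have "\<rho> g = adj (\<rho> (inv g))" using urep_inv[OF r ig] g by simp
    hence "\<rho> g * adj S = adj (\<rho> (inv g)) * adj S" by simp
    also have "\<dots> = adj (S * \<rho> (inv g))" by (rule adj_mult[OF Sc urep_carrier[OF r ig], symmetric])
    also have "S * \<rho> (inv g) = \<tau> (inv g) * S" using inter ig by simp
    also have "adj (\<tau> (inv g) * S) = adj S * adj (\<tau> (inv g))" by (rule adj_mult[OF urep_carrier[OF t ig] Sc])
    also have "adj (\<tau> (inv g)) = \<tau> g" using urep_inv[OF t ig] g by simp
    finally have e: "\<rho> g * adj S = adj S * \<tau> g" .
    have "\<rho> g * X = (\<rho> g * adj S) * S" unfolding X_def by (rule assoc_mult_mat[symmetric, OF rg adj_carrier[OF Sc] Sc])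
    also have "\<dots> = adj S * (\<tau> g * S)" unfolding e by (rule assoc_mult_mat[OF adj_carrier[OF Sc] tg Sc])
    also have "\<tau> g * S = S * \<rho> g" using inter g by simp
    also have "adj S * (S * \<rho> g) = X * \<rho> g" unfolding X_def by (rule assoc_mult_mat[symmetric, OF adj_carrier[OF Sc] Sc rg])
    finally show ?thesis .
  qed
  obtain lam v where v: "v \<in> carrier_vec k" "v \<noteq> 0\<^sub>v k" "X *\<^sub>v v = lam \<cdot>\<^sub>v v"
    using eigen_exists[OF Xc k] by blast
  define E where "E = {w \<in> carrier_vec k. X *\<^sub>v w = lam \<cdot>\<^sub>v w}"
  have sub: "subspace_vec k E" unfolding subspace_vec_def
  proof (intro conjI ballI allI)
    show "E \<subseteq> carrier_vec k" by (auto simp: E_def)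
    show "0\<^sub>v k \<in> E" unfolding E_def using Xc by (auto intro!: eq_vecI simp: scalar_prod_def)
  next
    fix x y assume x: "x \<in> E" and y: "y \<in> E"
    have xc: "x \<in> carrier_vec k" and yc: "y \<in> carrier_vec k" using x y by (auto simp: E_def)
    have "X *\<^sub>v (x + y) = X *\<^sub>v x + X *\<^sub>v y" by (rule mult_add_distrib_mat_vec[OF Xc xc yc])
    also have "\<dots> = lam \<cdot>\<^sub>v (x + y)" using x y xc yc by (auto simp: E_def smult_add_distrib_vec)
    finally show "x + y \<in> E" using xc yc by (simp add: E_def)
  next
    fix c x assume x: "x \<in> E"
    have xc: "x \<in> carrier_vec k" using x by (auto simp: E_def)
    have "X *\<^sub>v (c \<cdot>\<^sub>v x) = c \<cdot>\<^sub>v (X *\<^sub>v x)" by (rule mult_mat_vec[OF Xc xc])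
    also have "\<dots> = lam \<cdot>\<^sub>v (c \<cdot>\<^sub>v x)" using x by (simp add: E_def smult_smult_assoc mult.commute)
    finally show "c \<cdot>\<^sub>v x \<in> E" using xc by (simp add: E_def)
  qed
  have inv: "\<forall>g\<in>carrier G. \<forall>w\<in>E. \<rho> g *\<^sub>v w \<in> E"
  proof (intro ballI)
    fix g w assume g: "g \<in> carrier G" and w: "w \<in> E"
    have rg: "\<rho> g \<in> carrier_mat k k" by (rule urep_carrier[OF r g])
    have wc: "w \<in> carrier_vec k" using w by (auto simp: E_def)
    have "X *\<^sub>v (\<rho> g *\<^sub>v w) = (X * \<rho> g) *\<^sub>v w" by (rule assoc_mult_mat_vec[symmetric, OF Xc rg wc])
    also have "\<dots> = (\<rho> g * X) *\<^sub>v w" using comm[OF g] by simp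
    also have "\<dots> = \<rho> g *\<^sub>v (X *\<^sub>v w)" by (rule assoc_mult_mat_vec[OF rg Xc wc])
    also have "\<dots> = \<rho> g *\<^sub>v (lam \<cdot>\<^sub>v w)" using w by (simp add: E_def)
    also have "\<dots> = lam \<cdot>\<^sub>v (\<rho> g *\<^sub>v w)" by (rule mult_mat_vec[OF rg wc])
    finally show "\<rho> g *\<^sub>v w \<in> E" using rg wc by (simp add: E_def)
  qed
  have "E = {0\<^sub>v k} \<or> E = carrier_vec k" using irr sub inv by (simp add: irreducible_rep_def)
  moreover have "v \<in> E" using v by (simp add: E_def)
  ultimately have Eall: "E = carrier_vec k" using v by auto
  have Xent: "X $$ (a,b) = (if a = b then lam else 0)" if a: "a < k" and b: "b < k" for a b
  proof -
    have "unit_vec k b \<in> E" using Eall by simp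
    hence "X *\<^sub>v unit_vec k b = lam \<cdot>\<^sub>v unit_vec k b" by (simp add: E_def)
    hence "(X *\<^sub>v unit_vec k b) $ a = (lam \<cdot>\<^sub>v unit_vec k b) $ a" by simp
    moreover have "(X *\<^sub>v unit_vec k b) $ a = X $$ (a,b)" using Xc a b by (simp add: scalar_prod_right_unit)
    ultimately show ?thesis using a b by simp
  qed
  obtain i0 c0 where ic: "i0 < q" "c0 < k" "S $$ (i0,c0) \<noteq> 0"
  proof -
    have "\<not> (\<forall>i<q. \<forall>c<k. S $$ (i,c) = 0)"
    proof
      assume "\<forall>i<q. \<forall>c<k. S $$ (i,c) = 0"
      hence "S = 0\<^sub>m q k" using Sc by (intro eq_matI) auto
      thus False using Snz by simp
    qed
    thus ?thesis using that by blast
  qed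
  define r0 where "r0 = (\<Sum>i<q. (cmod (S $$ (i,c0)))\<^sup>2)"
  have "X $$ (c0,c0) = (\<Sum>i<q. cnj (S $$ (i,c0)) * S $$ (i,c0))"
    unfolding X_def by (rule adj_mult_index[OF Sc Sc ic(2) ic(2)])
  also have "\<dots> = of_real r0" unfolding r0_def by (rule sum_cnj_mult_real)
  finally have lamr: "lam = of_real r0" using Xent[OF ic(2) ic(2)] by simp
  have "r0 \<ge> (cmod (S $$ (i0,c0)))\<^sup>2" unfolding r0_def using ic(1)
    by (intro member_le_sum) auto
  hence r0pos: "r0 > 0" using ic(3) by (smt (verit) zero_less_power2 norm_eq_zero)
  define c where "c = complex_of_real (1 / sqrt r0)"
  define J where "J = c \<cdot>\<^sub>m S"
  have Jc: "J \<in> carrier_mat q k" using Sc by (simp add: J_def)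
  have "adj J * J = 1\<^sub>m k"
  proof (rule eq_matI)
    fix a b assume ab: "a < dim_row (1\<^sub>m k)" "b < dim_col (1\<^sub>m k)"
    hence a: "a < k" and b: "b < k" by auto
    have "(adj J * J) $$ (a,b) = (\<Sum>i<q. cnj (J $$ (i,a)) * J $$ (i,b))" by (rule adj_mult_index[OF Jc Jc a b])
    also have "\<dots> = (cnj c * c) * (\<Sum>i<q. cnj (S $$ (i,a)) * S $$ (i,b))"
      using Sc a b by (simp add: J_def sum_distrib_left algebra_simps)
    also have "(\<Sum>i<q. cnj (S $$ (i,a)) * S $$ (i,b)) = X $$ (a,b)"
      unfolding X_def by (rule adj_mult_index[OF Sc Sc a b, symmetric])
    also have "cnj c * c = of_real (1 / r0)" unfolding c_def using r0pos
      by (simp flip: of_real_mult)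
    finally show "(adj J * J) $$ (a,b) = 1\<^sub>m k $$ (a,b)"
      using Xent[OF a b] lamr a b r0pos by (simp flip: of_real_mult)
  qed (use Jc in auto)
  moreover have "\<forall>g\<in>carrier G. \<tau> g * J = J * \<rho> g"
  proof
    fix g assume g: "g \<in> carrier G"
    have "\<tau> g * J = c \<cdot>\<^sub>m (\<tau> g * S)" unfolding J_def by (rule mult_smult_distrib[OF urep_carrier[OF t g] Sc])
    also have "\<dots> = c \<cdot>\<^sub>m (S * \<rho> g)" using inter g by simp
    also have "\<dots> = J * \<rho> g" unfolding J_def by (rule mult_smult_assoc_mat[symmetric, OF Sc urep_carrier[OF r g]])
    finally show "\<tau> g * J = J * \<rho> g" .
  qed
  ultimately show ?thesis using Jc by blast
qed

end

context fgrp
begin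

definition isoinv :: "('g \<Rightarrow> complex mat) \<Rightarrow> nat \<Rightarrow> complex mat \<Rightarrow> nat \<Rightarrow> bool" where
  "isoinv \<sigma> p B k \<longleftrightarrow> B \<in> carrier_mat p k \<and> adj B * B = 1\<^sub>m k \<and>
     (\<forall>g\<in>carrier G. \<sigma> g * B = B * (adj B * \<sigma> g * B))"

lemma sub_urep_mult:
  assumes s: "unitary_rep G p \<sigma>" and iso: "isoinv \<sigma> p B k" and g: "g \<in> carrier G" and h: "h \<in> carrier G"
  shows "adj B * \<sigma> (g \<otimes> h) * B = (adj B * \<sigma> g * B) * (adj B * \<sigma> h * B)"
proof -
  have Bc: "B \<in> carrier_mat p k" and BB: "adj B * B = 1\<^sub>m k" using iso by (auto simp: isoinv_def)
  have sg: "\<sigma> g \<in> carrier_mat p p" and sh: "\<sigma> h \<in> carrier_mat p p" using urep_carrier[OF s] g h by auto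
  have aB: "adj B \<in> carrier_mat k p" using Bc by simp
  have rh: "adj B * \<sigma> h * B \<in> carrier_mat k k" using aB sh Bc by (meson mult_carrier_mat)
  have asg: "adj B * \<sigma> g \<in> carrier_mat k p" using aB sg by (rule mult_carrier_mat)
  have "adj B * \<sigma> (g \<otimes> h) * B = adj B * (\<sigma> g * \<sigma> h) * B" using urep_mult[OF s g h] by simp
  also have "adj B * (\<sigma> g * \<sigma> h) = (adj B * \<sigma> g) * \<sigma> h"
    by (rule assoc_mult_mat[symmetric, OF aB sg sh])
  also have "(adj B * \<sigma> g) * \<sigma> h * B = (adj B * \<sigma> g) * (\<sigma> h * B)"
    by (rule assoc_mult_mat[OF asg sh Bc])
  also have "\<sigma> h * B = B * (adj B * \<sigma> h * B)" using iso h by (simp add: isoinv_def)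
  also have "(adj B * \<sigma> g) * (B * (adj B * \<sigma> h * B)) = (adj B * \<sigma> g * B) * (adj B * \<sigma> h * B)"
    by (rule assoc_mult_mat[symmetric, OF asg Bc rh])
  finally show ?thesis .
qed

lemma sub_urep:
  assumes s: "unitary_rep G p \<sigma>" and iso: "isoinv \<sigma> p B k"
  shows "unitary_rep G k (\<lambda>g. adj B * \<sigma> g * B)"
proof -
  have Bc: "B \<in> carrier_mat p k" and BB: "adj B * B = 1\<^sub>m k" using iso by (auto simp: isoinv_def)
  have aB: "adj B \<in> carrier_mat k p" using Bc by simp
  have rc: "adj B * \<sigma> g * B \<in> carrier_mat k k" if g: "g \<in> carrier G" for g
    using aB urep_carrier[OF s g] Bc by (meson mult_carrier_mat)
  have one: "adj B * \<sigma> \<one> * B = 1\<^sub>m k"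
  proof -
    have "adj B * 1\<^sub>m p = adj B" by (rule right_mult_one_mat[OF aB])
    thus ?thesis using urep_one[OF s] BB by simp
  qed
  have adjr: "adj (adj B * \<sigma> g * B) = adj B * \<sigma> (inv g) * B" if g: "g \<in> carrier G" for g
  proof -
    have sg: "\<sigma> g \<in> carrier_mat p p" by (rule urep_carrier[OF s g])
    have "adj (adj B * \<sigma> g * B) = adj B * adj (adj B * \<sigma> g)"
      by (rule adj_mult[OF mult_carrier_mat[OF aB sg] Bc])
    also have "adj (adj B * \<sigma> g) = adj (\<sigma> g) * B" using adj_mult[OF aB sg] by simp
    also have "adj (\<sigma> g) = \<sigma> (inv g)" using urep_inv[OF s g] by simp
    also have "adj B * (\<sigma> (inv g) * B) = adj B * \<sigma> (inv g) * B"
      by (rule assoc_mult_mat[symmetric, OF aB urep_carrier[OF s inv_closed[OF g]] Bc])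
    finally show ?thesis .
  qed
  have un: "unitary_mat k (adj B * \<sigma> g * B)" if g: "g \<in> carrier G" for g
  proof -
    have ig: "inv g \<in> carrier G" using g by simp
    have "adj (adj B * \<sigma> g * B) * (adj B * \<sigma> g * B) = adj B * \<sigma> (inv g \<otimes> g) * B"
      unfolding adjr[OF g] by (rule sub_urep_mult[OF s iso ig g, symmetric])
    moreover have "(adj B * \<sigma> g * B) * adj (adj B * \<sigma> g * B) = adj B * \<sigma> (g \<otimes> inv g) * B"
      unfolding adjr[OF g] by (rule sub_urep_mult[OF s iso g ig, symmetric])
    moreover have "inv g \<otimes> g = \<one>" "g \<otimes> inv g = \<one>" using g by auto
    ultimately show ?thesis unfolding unitary_mat_def using rc[OF g] one by metis
  qed
  show ?thesis unfolding unitary_rep_def rep_def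
    using rc one un sub_urep_mult[OF s iso] by blast
qed

lemma iso_adj_inter:
  assumes s: "unitary_rep G p \<sigma>" and iso: "isoinv \<sigma> p B k" and g: "g \<in> carrier G"
  shows "adj B * \<sigma> g = (adj B * \<sigma> g * B) * adj B"
proof -
  have Bc: "B \<in> carrier_mat p k" using iso by (auto simp: isoinv_def)
  have ig: "inv g \<in> carrier G" using g by simp
  have r: "unitary_rep G k (\<lambda>g. adj B * \<sigma> g * B)" by (rule sub_urep[OF s iso])
  have "\<sigma> (inv g) * B = B * (adj B * \<sigma> (inv g) * B)" using iso ig by (simp add: isoinv_def)
  hence "adj (\<sigma> (inv g) * B) = adj (B * (adj B * \<sigma> (inv g) * B))" by simp
  moreover have "adj (\<sigma> (inv g) * B) = adj B * adj (\<sigma> (inv g))"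
    by (rule adj_mult[OF urep_carrier[OF s ig] Bc])
  moreover have "adj (\<sigma> (inv g)) = \<sigma> g" using urep_inv[OF s ig] g by simp
  moreover have "adj (B * (adj B * \<sigma> (inv g) * B)) = adj (adj B * \<sigma> (inv g) * B) * adj B"
    by (rule adj_mult[OF Bc urep_carrier[OF r ig]])
  moreover have "adj (adj B * \<sigma> (inv g) * B) = adj B * \<sigma> g * B"
    using urep_inv[OF r ig] g by simp
  ultimately show ?thesis by simp
qed

lemma isoinv_intro:
  assumes s: "unitary_rep G p \<sigma>" and Bc: "B \<in> carrier_mat p k" and BB: "adj B * B = 1\<^sub>m k"
    and R: "\<And>g x. g \<in> carrier G \<Longrightarrow> x \<in> carrier_vec k \<Longrightarrow> \<exists>y\<in>carrier_vec k. \<sigma> g *\<^sub>v (B *\<^sub>v x) = B *\<^sub>v y"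
  shows "isoinv \<sigma> p B k"
  unfolding isoinv_def
proof (intro conjI ballI Bc BB)
  fix g assume g: "g \<in> carrier G"
  have sg: "\<sigma> g \<in> carrier_mat p p" by (rule urep_carrier[OF s g])
  have aB: "adj B \<in> carrier_mat k p" using Bc by simp
  have r: "adj B * \<sigma> g * B \<in> carrier_mat k k" using aB sg Bc by (meson mult_carrier_mat)
  show "\<sigma> g * B = B * (adj B * \<sigma> g * B)"
  proof (rule mat_eq_by_vec[OF mult_carrier_mat[OF sg Bc] mult_carrier_mat[OF Bc r]])
    fix x :: "complex vec" assume x: "x \<in> carrier_vec k"
    obtain y where y: "y \<in> carrier_vec k" "\<sigma> g *\<^sub>v (B *\<^sub>v x) = B *\<^sub>v y" using R[OF g x] by blast
    have "(\<sigma> g * B) *\<^sub>v x = \<sigma> g *\<^sub>v (B *\<^sub>v x)" by (rule assoc_mult_mat_vec[OF sg Bc x])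
    also have "\<dots> = B *\<^sub>v y" by (rule y(2))
    finally have 1: "(\<sigma> g * B) *\<^sub>v x = B *\<^sub>v y" .
    have "(B * (adj B * \<sigma> g * B)) *\<^sub>v x = B *\<^sub>v ((adj B * \<sigma> g * B) *\<^sub>v x)"
      by (rule assoc_mult_mat_vec[OF Bc r x])
    also have "(adj B * \<sigma> g * B) *\<^sub>v x = (adj B * \<sigma> g) *\<^sub>v (B *\<^sub>v x)"
      by (rule assoc_mult_mat_vec[OF mult_carrier_mat[OF aB sg] Bc x])
    also have "\<dots> = adj B *\<^sub>v (\<sigma> g *\<^sub>v (B *\<^sub>v x))"
      by (rule assoc_mult_mat_vec[OF aB sg mult_mat_vec_carrier[OF Bc x]])
    also have "\<dots> = adj B *\<^sub>v (B *\<^sub>v y)" unfolding y(2) ..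
    also have "\<dots> = (adj B * B) *\<^sub>v y" by (rule assoc_mult_mat_vec[symmetric, OF aB Bc y(1)])
    also have "\<dots> = y" unfolding BB using y(1) by simp
    finally show "(\<sigma> g * B) *\<^sub>v x = (B * (adj B * \<sigma> g * B)) *\<^sub>v x" using 1 by simp
  qed
qed

lemma iso_comp:
  assumes Bc: "B \<in> carrier_mat p k" and BB: "adj B * B = 1\<^sub>m k"
    and Cc: "C \<in> carrier_mat k j" and CC: "adj C * C = 1\<^sub>m j"
  shows "adj (B * C) * (B * C) = 1\<^sub>m j"
proof -
  have aB: "adj B \<in> carrier_mat k p" and aC: "adj C \<in> carrier_mat j k" using Bc Cc by auto
  have "adj (B * C) = adj C * adj B" by (rule adj_mult[OF Bc Cc])
  hence "adj (B * C) * (B * C) = adj C * adj B * (B * C)" by simp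
  also have "\<dots> = adj C * (adj B * (B * C))" by (rule assoc_mult_mat[OF aC aB mult_carrier_mat[OF Bc Cc]])
  also have "adj B * (B * C) = adj B * B * C" by (rule assoc_mult_mat[symmetric, OF aB Bc Cc])
  also have "\<dots> = C" unfolding BB by (rule left_mult_one_mat[OF Cc])
  finally show ?thesis using CC by simp
qed

lemma isoinv_vec:
  assumes s: "unitary_rep G p \<sigma>" and iso: "isoinv \<sigma> p B k" and g: "g \<in> carrier G" and x: "x \<in> carrier_vec k"
  shows "\<sigma> g *\<^sub>v (B *\<^sub>v x) = B *\<^sub>v ((adj B * \<sigma> g * B) *\<^sub>v x)"
proof -
  have Bc: "B \<in> carrier_mat p k" using iso by (simp add: isoinv_def)
  have r: "adj B * \<sigma> g * B \<in> carrier_mat k k" using urep_carrier[OF sub_urep[OF s iso] g] .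
  have "\<sigma> g *\<^sub>v (B *\<^sub>v x) = (\<sigma> g * B) *\<^sub>v x" by (rule assoc_mult_mat_vec[symmetric, OF urep_carrier[OF s g] Bc x])
  also have "\<sigma> g * B = B * (adj B * \<sigma> g * B)" using iso g by (simp add: isoinv_def)
  also have "(B * (adj B * \<sigma> g * B)) *\<^sub>v x = B *\<^sub>v ((adj B * \<sigma> g * B) *\<^sub>v x)"
    by (rule assoc_mult_mat_vec[OF Bc r x])
  finally show ?thesis .
qed

lemma min_irreducible:
  assumes s: "unitary_rep G p \<sigma>" and p: "p > 0"
  shows "\<exists>k B. k \<ge> 1 \<and> isoinv \<sigma> p B k \<and> irreducible_rep G k (\<lambda>g. adj B * \<sigma> g * B)"
proof -
  define Q where "Q = {k. k \<ge> 1 \<and> (\<exists>B. isoinv \<sigma> p B k)}"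
  have "isoinv \<sigma> p (1\<^sub>m p) p"
    unfolding isoinv_def
  proof (intro conjI ballI)
    fix g assume g: "g \<in> carrier G"
    have sg: "\<sigma> g \<in> carrier_mat p p" by (rule urep_carrier[OF s g])
    show "\<sigma> g * 1\<^sub>m p = 1\<^sub>m p * (adj (1\<^sub>m p) * \<sigma> g * 1\<^sub>m p)"
      using right_mult_one_mat[OF sg] left_mult_one_mat[OF sg] by simp
  qed auto
  hence pQ: "p \<in> Q" using p by (auto simp: Q_def)
  define k where "k = (LEAST k. k \<in> Q)"
  have kQ: "k \<in> Q" unfolding k_def using pQ by (rule LeastI)
  have kmin: "\<And>j. j \<in> Q \<Longrightarrow> k \<le> j" unfolding k_def by (rule Least_le)
  obtain B where k1: "k \<ge> 1" and iso: "isoinv \<sigma> p B k" using kQ by (auto simp: Q_def)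
  have Bc: "B \<in> carrier_mat p k" and BB: "adj B * B = 1\<^sub>m k" using iso by (auto simp: isoinv_def)
  define \<rho> where "\<rho> g = adj B * \<sigma> g * B" for g
  have r: "unitary_rep G k \<rho>" unfolding \<rho>_def by (rule sub_urep[OF s iso])
  have "irreducible_rep G k \<rho>"
    unfolding irreducible_rep_def
  proof (intro conjI allI impI)
    show "rep G k \<rho>" using r by (simp add: unitary_rep_def)
    show "k > 0" using k1 by simp
    fix S assume SS: "subspace_vec k S \<and> (\<forall>g\<in>carrier G. \<forall>v\<in>S. \<rho> g *\<^sub>v v \<in> S)"
    hence sub: "subspace_vec k S" and inv: "\<And>g v. g \<in> carrier G \<Longrightarrow> v \<in> S \<Longrightarrow> \<rho> g *\<^sub>v v \<in> S" by auto
    show "S = {0\<^sub>v k} \<or> S = carrier_vec k"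
    proof (rule ccontr)
      assume nt: "\<not> (S = {0\<^sub>v k} \<or> S = carrier_vec k)"
      obtain j C where C: "C \<in> carrier_mat k j" "adj C * C = 1\<^sub>m j" "range_in C j S" "j \<le> k"
        and span: "\<forall>v\<in>S. \<exists>x\<in>carrier_vec j. v = C *\<^sub>v x"
        using orthonormal_basis[OF sub] by blast
      have S0: "0\<^sub>v k \<in> S" and Sc: "S \<subseteq> carrier_vec k" using sub by (auto simp: subspace_vec_def)
      obtain v where v: "v \<in> S" "v \<noteq> 0\<^sub>v k" using nt S0 by blast
      have j1: "j \<ge> 1"
      proof (rule ccontr)
        assume "\<not> j \<ge> 1"
        hence j0: "j = 0" by simp
        obtain x where x: "x \<in> carrier_vec j" "v = C *\<^sub>v x" using span v by blast
        have "C *\<^sub>v x = 0\<^sub>v k" using C(1) x(1) j0 by (intro eq_vecI) (auto simp: scalar_prod_def)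
        thus False using v x by simp
      qed
      have jk: "j < k"
      proof (rule ccontr)
        assume "\<not> j < k"
        hence jk: "j = k" using C(4) by simp
        have Ck: "C \<in> carrier_mat k k" using C(1) jk by simp
        have CC': "C * adj C = 1\<^sub>m k" using mat_mult_left_right_inverse[OF adj_carrier[OF Ck] Ck] C(2) jk by simp
        have "carrier_vec k \<subseteq> S"
        proof
          fix w :: "complex vec" assume w: "w \<in> carrier_vec k"
          have "w = (C * adj C) *\<^sub>v w" unfolding CC' using w by simp
          also have "\<dots> = C *\<^sub>v (adj C *\<^sub>v w)" by (rule assoc_mult_mat_vec[OF Ck adj_carrier[OF Ck] w])
          finally show "w \<in> S" using C(3) jk w Ck unfolding range_in_def by (metis adj_carrier mult_mat_vec_carrier)
        qed
        thus False using nt Sc by blast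
      qed
      have "isoinv \<sigma> p (B * C) j"
      proof (rule isoinv_intro[OF s mult_carrier_mat[OF Bc C(1)] iso_comp[OF Bc BB C(1) C(2)]])
        fix g and x :: "complex vec" assume g: "g \<in> carrier G" and x: "x \<in> carrier_vec j"
        have Cx: "C *\<^sub>v x \<in> carrier_vec k" using C(1) x by simp
        have "\<rho> g *\<^sub>v (C *\<^sub>v x) \<in> S" using inv[OF g] C(3) x by (simp add: range_in_def)
        then obtain y where y: "y \<in> carrier_vec j" "\<rho> g *\<^sub>v (C *\<^sub>v x) = C *\<^sub>v y" using span by blast
        have "\<sigma> g *\<^sub>v ((B * C) *\<^sub>v x) = \<sigma> g *\<^sub>v (B *\<^sub>v (C *\<^sub>v x))"
          using assoc_mult_mat_vec[OF Bc C(1) x] by simp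
        also have "\<dots> = B *\<^sub>v (\<rho> g *\<^sub>v (C *\<^sub>v x))" unfolding \<rho>_def by (rule isoinv_vec[OF s iso g Cx])
        also have "\<dots> = B *\<^sub>v (C *\<^sub>v y)" unfolding y(2) ..
        also have "\<dots> = (B * C) *\<^sub>v y" by (rule assoc_mult_mat_vec[symmetric, OF Bc C(1) y(1)])
        finally show "\<exists>y\<in>carrier_vec j. \<sigma> g *\<^sub>v ((B * C) *\<^sub>v x) = (B * C) *\<^sub>v y" using y(1) by blast
      qed
      hence "j \<in> Q" using j1 by (auto simp: Q_def)
      thus False using kmin jk by force
    qed
  qed
  thus ?thesis using k1 iso unfolding \<rho>_def by blast
qed

lemma complement:
  assumes s: "unitary_rep G p \<sigma>" and iso: "isoinv \<sigma> p B k"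
  shows "\<exists>k' B'. isoinv \<sigma> p B' k' \<and> B * adj B + B' * adj B' = 1\<^sub>m p \<and> k + k' = p"
proof -
  have Bc: "B \<in> carrier_mat p k" and BB: "adj B * B = 1\<^sub>m k" using iso by (auto simp: isoinv_def)
  have aB: "adj B \<in> carrier_mat k p" using Bc by simp
  define S where "S = {v \<in> carrier_vec p. adj B *\<^sub>v v = 0\<^sub>v k}"
  have sub: "subspace_vec p S" unfolding subspace_vec_def
  proof (intro conjI ballI allI)
    show "S \<subseteq> carrier_vec p" by (auto simp: S_def)
    show "0\<^sub>v p \<in> S" unfolding S_def using aB by (auto intro!: eq_vecI simp: scalar_prod_def)
  next
    fix x y assume x: "x \<in> S" and y: "y \<in> S"
    have xc: "x \<in> carrier_vec p" and yc: "y \<in> carrier_vec p" using x y by (auto simp: S_def)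
    have "adj B *\<^sub>v (x + y) = adj B *\<^sub>v x + adj B *\<^sub>v y" by (rule mult_add_distrib_mat_vec[OF aB xc yc])
    also have "\<dots> = 0\<^sub>v k" using x y by (simp add: S_def)
    finally show "x + y \<in> S" using xc yc by (simp add: S_def)
  next
    fix c x assume x: "x \<in> S"
    have xc: "x \<in> carrier_vec p" using x by (auto simp: S_def)
    have "adj B *\<^sub>v (c \<cdot>\<^sub>v x) = c \<cdot>\<^sub>v (adj B *\<^sub>v x)" by (rule mult_mat_vec[OF aB xc])
    also have "\<dots> = c \<cdot>\<^sub>v 0\<^sub>v k" using x by (simp add: S_def)
    also have "\<dots> = 0\<^sub>v k" by (intro eq_vecI) auto
    finally show "c \<cdot>\<^sub>v x \<in> S" using xc by (simp add: S_def)
  qed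
  obtain k' B' where B': "B' \<in> carrier_mat p k'" "adj B' * B' = 1\<^sub>m k'" "range_in B' k' S"
    and span: "\<forall>v\<in>S. \<exists>x\<in>carrier_vec k'. v = B' *\<^sub>v x"
    using orthonormal_basis[OF sub] by blast
  have aB': "adj B' \<in> carrier_mat k' p" using B'(1) by simp
  have A: "adj B * B' = 0\<^sub>m k k'"
  proof (rule mat_eq_by_vec[OF mult_carrier_mat[OF aB B'(1)] zero_carrier_mat])
    fix x :: "complex vec" assume x: "x \<in> carrier_vec k'"
    have "(adj B * B') *\<^sub>v x = adj B *\<^sub>v (B' *\<^sub>v x)" by (rule assoc_mult_mat_vec[OF aB B'(1) x])
    also have "\<dots> = 0\<^sub>v k" using B'(3) x by (simp add: range_in_def S_def)
    also have "\<dots> = 0\<^sub>m k k' *\<^sub>v x" using x by (intro eq_vecI) (auto simp: scalar_prod_def)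
    finally show "(adj B * B') *\<^sub>v x = 0\<^sub>m k k' *\<^sub>v x" .
  qed
  have A': "adj B' * B = 0\<^sub>m k' k"
  proof -
    have "adj (adj B * B') = adj B' * adj (adj B)" by (rule adj_mult[OF aB B'(1)])
    thus ?thesis using A by simp
  qed
  have fix': "B' *\<^sub>v (adj B' *\<^sub>v y) = y" if y: "y \<in> S" for y
  proof -
    obtain z where z: "z \<in> carrier_vec k'" "y = B' *\<^sub>v z" using span y by blast
    have "adj B' *\<^sub>v (B' *\<^sub>v z) = (adj B' * B') *\<^sub>v z" by (rule assoc_mult_mat_vec[symmetric, OF aB' B'(1) z(1)])
    also have "\<dots> = z" unfolding B'(2) using z(1) by simp
    finally show ?thesis using z by simp
  qed
  have decomp: "B * adj B + B' * adj B' = 1\<^sub>m p"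
  proof (rule mat_eq_by_vec[OF add_carrier_mat[OF mult_carrier_mat[OF B'(1) aB']] one_carrier_mat])
    fix v :: "complex vec" assume v: "v \<in> carrier_vec p"
    define u where "u = B *\<^sub>v (adj B *\<^sub>v v)"
    have uc: "u \<in> carrier_vec p" unfolding u_def by (rule mult_mat_vec_carrier[OF Bc mult_mat_vec_carrier[OF aB v]])
    define w where "w = v - u"
    have wc: "w \<in> carrier_vec p" using v uc by (simp add: w_def)
    have "adj B *\<^sub>v w = adj B *\<^sub>v v - adj B *\<^sub>v u" unfolding w_def by (rule mult_minus_distrib_mat_vec[OF aB v uc])
    also have "adj B *\<^sub>v u = (adj B * B) *\<^sub>v (adj B *\<^sub>v v)"
      unfolding u_def by (rule assoc_mult_mat_vec[symmetric, OF aB Bc mult_mat_vec_carrier[OF aB v]])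
    also have "\<dots> = adj B *\<^sub>v v" unfolding BB using aB v by simp
    finally have "adj B *\<^sub>v w = 0\<^sub>v k" using aB v by simp
    hence wS: "w \<in> S" using wc by (simp add: S_def)
    have "adj B' *\<^sub>v u = (adj B' * B) *\<^sub>v (adj B *\<^sub>v v)"
      unfolding u_def by (rule assoc_mult_mat_vec[symmetric, OF aB' Bc mult_mat_vec_carrier[OF aB v]])
    also have "\<dots> = 0\<^sub>v k'" unfolding A' using aB v by (intro eq_vecI) (auto simp: scalar_prod_def)
    finally have u0: "adj B' *\<^sub>v u = 0\<^sub>v k'" .
    have vuw: "v = u + w" unfolding w_def using v uc by (intro eq_vecI) auto
    have "adj B' *\<^sub>v v = adj B' *\<^sub>v u + adj B' *\<^sub>v w" unfolding vuw by (rule mult_add_distrib_mat_vec[OF aB' uc wc])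
    also have "\<dots> = adj B' *\<^sub>v w" unfolding u0 using aB' wc by simp
    finally have "B' *\<^sub>v (adj B' *\<^sub>v v) = w" using fix'[OF wS] by simp
    moreover have "(B * adj B + B' * adj B') *\<^sub>v v = (B * adj B) *\<^sub>v v + (B' * adj B') *\<^sub>v v"
      by (rule add_mult_distrib_mat_vec[OF mult_carrier_mat[OF Bc aB] mult_carrier_mat[OF B'(1) aB'] v])
    moreover have "(B * adj B) *\<^sub>v v = u" unfolding u_def by (rule assoc_mult_mat_vec[OF Bc aB v])
    moreover have "(B' * adj B') *\<^sub>v v = B' *\<^sub>v (adj B' *\<^sub>v v)" by (rule assoc_mult_mat_vec[OF B'(1) aB' v])
    ultimately have "(B * adj B + B' * adj B') *\<^sub>v v = u + w" by simp
    thus "(B * adj B + B' * adj B') *\<^sub>v v = 1\<^sub>m p *\<^sub>v v" using vuw v by simp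
  qed
  have "isoinv \<sigma> p B' k'"
  proof (rule isoinv_intro[OF s B'(1) B'(2)])
    fix g and x :: "complex vec" assume g: "g \<in> carrier G" and x: "x \<in> carrier_vec k'"
    have B'x: "B' *\<^sub>v x \<in> carrier_vec p" using B'(1) x by simp
    have sg: "\<sigma> g \<in> carrier_mat p p" by (rule urep_carrier[OF s g])
    have rg: "adj B * \<sigma> g * B \<in> carrier_mat k k" by (rule urep_carrier[OF sub_urep[OF s iso] g])
    have "adj B *\<^sub>v (\<sigma> g *\<^sub>v (B' *\<^sub>v x)) = (adj B * \<sigma> g) *\<^sub>v (B' *\<^sub>v x)"
      by (rule assoc_mult_mat_vec[symmetric, OF aB sg B'x])
    also have "adj B * \<sigma> g = (adj B * \<sigma> g * B) * adj B" by (rule iso_adj_inter[OF s iso g])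
    also have "((adj B * \<sigma> g * B) * adj B) *\<^sub>v (B' *\<^sub>v x) = (adj B * \<sigma> g * B) *\<^sub>v (adj B *\<^sub>v (B' *\<^sub>v x))"
      by (rule assoc_mult_mat_vec[OF rg aB B'x])
    also have "adj B *\<^sub>v (B' *\<^sub>v x) = 0\<^sub>v k" using B'(3) x by (simp add: range_in_def S_def)
    also have "(adj B * \<sigma> g * B) *\<^sub>v 0\<^sub>v k = 0\<^sub>v k" using rg by (intro eq_vecI) (auto simp: scalar_prod_def)
    finally have "\<sigma> g *\<^sub>v (B' *\<^sub>v x) \<in> S" using sg B'x by (simp add: S_def)
    thus "\<exists>y\<in>carrier_vec k'. \<sigma> g *\<^sub>v (B' *\<^sub>v x) = B' *\<^sub>v y" using span by blast
  qed
  moreover have "k + k' = p"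
  proof -
    have "mtrace (B * adj B + B' * adj B') = mtrace (B * adj B) + mtrace (B' * adj B')"
      by (rule mtrace_add[OF mult_carrier_mat[OF Bc aB] mult_carrier_mat[OF B'(1) aB']])
    also have "\<dots> = of_nat k + of_nat k'" using mtrace_isometry[OF Bc BB] mtrace_isometry[OF B'(1) B'(2)] by simp
    finally have "(of_nat p :: complex) = of_nat k + of_nat k'" unfolding decomp mtrace_one .
    thus ?thesis by (metis of_nat_add of_nat_eq_iff)
  qed
  ultimately show ?thesis using decomp by blast
qed

lemma piece:
  assumes s: "unitary_rep G p \<sigma>" and iso: "isoinv \<sigma> p B k"
    and A: "\<And>g. g \<in> carrier G \<Longrightarrow> A g \<in> carrier_mat q q"
    and Jc: "Jx \<in> carrier_mat q k" and JJ: "adj Jx * Jx = 1\<^sub>m k"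
    and inter: "\<forall>g\<in>carrier G. A g * Jx = Jx * (adj B * \<sigma> g * B)"
  shows "Jx * adj B \<in> carrier_mat q p" "adj (Jx * adj B) * (Jx * adj B) = B * adj B"
    "\<forall>g\<in>carrier G. A g * (Jx * adj B) = (Jx * adj B) * \<sigma> g"
proof -
  have Bc: "B \<in> carrier_mat p k" using iso by (simp add: isoinv_def)
  have aB: "adj B \<in> carrier_mat k p" using Bc by simp
  have aJ: "adj Jx \<in> carrier_mat k q" using Jc by simp
  show "Jx * adj B \<in> carrier_mat q p" using Jc aB by (rule mult_carrier_mat)
  have "adj (Jx * adj B) = B * adj Jx" using adj_mult[OF Jc aB] by simp
  hence "adj (Jx * adj B) * (Jx * adj B) = B * adj Jx * (Jx * adj B)" by simp
  also have "\<dots> = B * (adj Jx * (Jx * adj B))"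
    by (rule assoc_mult_mat[OF Bc aJ mult_carrier_mat[OF Jc aB]])
  also have "adj Jx * (Jx * adj B) = adj Jx * Jx * adj B" by (rule assoc_mult_mat[symmetric, OF aJ Jc aB])
  also have "\<dots> = adj B" unfolding JJ by (rule left_mult_one_mat[OF aB])
  finally show "adj (Jx * adj B) * (Jx * adj B) = B * adj B" .
  show "\<forall>g\<in>carrier G. A g * (Jx * adj B) = (Jx * adj B) * \<sigma> g"
  proof
    fix g assume g: "g \<in> carrier G"
    have sg: "\<sigma> g \<in> carrier_mat p p" by (rule urep_carrier[OF s g])
    have rg: "adj B * \<sigma> g * B \<in> carrier_mat k k" by (rule urep_carrier[OF sub_urep[OF s iso] g])
    have "A g * (Jx * adj B) = (A g * Jx) * adj B" by (rule assoc_mult_mat[symmetric, OF A[OF g] Jc aB])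
    also have "\<dots> = Jx * (adj B * \<sigma> g * B) * adj B" using inter g by simp
    also have "\<dots> = Jx * ((adj B * \<sigma> g * B) * adj B)" by (rule assoc_mult_mat[OF Jc rg aB])
    also have "(adj B * \<sigma> g * B) * adj B = adj B * \<sigma> g" by (rule iso_adj_inter[OF s iso g, symmetric])
    also have "Jx * (adj B * \<sigma> g) = (Jx * adj B) * \<sigma> g" by (rule assoc_mult_mat[symmetric, OF Jc aB sg])
    finally show "A g * (Jx * adj B) = (Jx * adj B) * \<sigma> g" .
  qed
qed

definition good :: "('g \<Rightarrow> complex mat) \<Rightarrow> ('g \<Rightarrow> complex mat) \<Rightarrow> nat \<Rightarrow> bool" where
  "good \<pi>' \<sigma> p \<longleftrightarrow> (\<forall>k \<rho> C. unitary_rep G k \<rho> \<and> irreducible_rep G k \<rho> \<and> C \<in> carrier_mat p k \<and>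
      adj C * C = 1\<^sub>m k \<and> (\<forall>g\<in>carrier G. \<sigma> g * C = C * \<rho> g) \<longrightarrow>
      Re (char_inner G (character G \<rho>) (character G \<pi>')) > 0)"

lemma embed:
  assumes w: "unitary_rep G d' \<pi>'"
  shows "unitary_rep G p \<sigma> \<Longrightarrow> good \<pi>' \<sigma> p \<Longrightarrow> \<exists>M J. M \<ge> 1 \<and> J \<in> carrier_mat (d'*M) p \<and>
     adj J * J = 1\<^sub>m p \<and> (\<forall>g\<in>carrier G. tensor_id (\<pi>' g) M * J = J * \<sigma> g)"
proof (induction p arbitrary: \<sigma> rule: less_induct)
  case (less p \<sigma>)
  note s = less.prems(1) and gd = less.prems(2)
  show ?case
  proof (cases "p = 0")
    case True
    define J where "J = (0\<^sub>m (d'*1) 0 :: complex mat)"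
    have Jc: "J \<in> carrier_mat (d'*1) p" using True by (simp add: J_def)
    moreover have "adj J * J = 1\<^sub>m p" using True by (intro eq_matI) (auto simp: J_def)
    moreover have "\<forall>g\<in>carrier G. tensor_id (\<pi>' g) 1 * J = J * \<sigma> g"
    proof
      fix g assume g: "g \<in> carrier G"
      have c1: "tensor_id (\<pi>' g) 1 * J \<in> carrier_mat (d'*1) p"
        using tensor_id_carrier[OF urep_carrier[OF w g]] Jc by (rule mult_carrier_mat)
      have c2: "J * \<sigma> g \<in> carrier_mat (d'*1) p" using Jc urep_carrier[OF s g] by (rule mult_carrier_mat)
      show "tensor_id (\<pi>' g) 1 * J = J * \<sigma> g"
      proof (rule eq_matI)
        show "dim_row (tensor_id (\<pi>' g) 1 * J) = dim_row (J * \<sigma> g)" using carrier_matD(1)[OF c1] carrier_matD(1)[OF c2] by simp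
        show "dim_col (tensor_id (\<pi>' g) 1 * J) = dim_col (J * \<sigma> g)" using carrier_matD(2)[OF c1] carrier_matD(2)[OF c2] by simp
        fix i j assume "j < dim_col (J * \<sigma> g)"
        hence False using carrier_matD(2)[OF c2] True by simp
        thus "(tensor_id (\<pi>' g) 1 * J) $$ (i, j) = (J * \<sigma> g) $$ (i, j)" ..
      qed
    qed
    ultimately show ?thesis by (intro exI[of _ 1] exI[of _ J]) auto
  next
    case False
    hence p: "p > 0" by simp
    obtain k B where k1: "k \<ge> 1" and iso: "isoinv \<sigma> p B k" and irr: "irreducible_rep G k (\<lambda>g. adj B * \<sigma> g * B)"
      using min_irreducible[OF s p] by blast
    define \<rho> where "\<rho> g = adj B * \<sigma> g * B" for g
    have r: "unitary_rep G k \<rho>" unfolding \<rho>_def by (rule sub_urep[OF s iso])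
    have Bc: "B \<in> carrier_mat p k" and BB: "adj B * B = 1\<^sub>m k" using iso by (auto simp: isoinv_def)
    have aB: "adj B \<in> carrier_mat k p" using Bc by simp
    have pos: "Re (char_inner G (character G \<rho>) (character G \<pi>')) > 0"
      using gd r irr Bc BB iso unfolding good_def isoinv_def \<rho>_def by blast
    obtain S where S: "S \<in> carrier_mat d' k" "S \<noteq> 0\<^sub>m d' k" "\<forall>g\<in>carrier G. \<pi>' g * S = S * \<rho> g"
      using intertwiner_exists[OF w r pos] by blast
    obtain J1 where J1: "J1 \<in> carrier_mat d' k" "adj J1 * J1 = 1\<^sub>m k" "\<forall>g\<in>carrier G. \<pi>' g * J1 = J1 * \<rho> g"
      using schur_iso[OF w r irr[folded \<rho>_def] S] by blast
    obtain k' B' where iso': "isoinv \<sigma> p B' k'" and dec: "B * adj B + B' * adj B' = 1\<^sub>m p" and kk: "k + k' = p"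
      using complement[OF s iso] by blast
    have B'c: "B' \<in> carrier_mat p k'" and B'B': "adj B' * B' = 1\<^sub>m k'" using iso' by (auto simp: isoinv_def)
    define \<sigma>2 where "\<sigma>2 g = adj B' * \<sigma> g * B'" for g
    have s2: "unitary_rep G k' \<sigma>2" unfolding \<sigma>2_def by (rule sub_urep[OF s iso'])
    have gd2: "good \<pi>' \<sigma>2 k'"
      unfolding good_def
    proof (intro allI impI)
      fix k2 \<rho>2 C
      assume H: "unitary_rep G k2 \<rho>2 \<and> irreducible_rep G k2 \<rho>2 \<and> C \<in> carrier_mat k' k2 \<and>
        adj C * C = 1\<^sub>m k2 \<and> (\<forall>g\<in>carrier G. \<sigma>2 g * C = C * \<rho>2 g)"
      hence Cc: "C \<in> carrier_mat k' k2" and CC: "adj C * C = 1\<^sub>m k2" by auto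
      have "\<forall>g\<in>carrier G. \<sigma> g * (B' * C) = (B' * C) * \<rho>2 g"
      proof
        fix g assume g: "g \<in> carrier G"
        have sg: "\<sigma> g \<in> carrier_mat p p" by (rule urep_carrier[OF s g])
        have s2g: "\<sigma>2 g \<in> carrier_mat k' k'" by (rule urep_carrier[OF s2 g])
        have r2g: "\<rho>2 g \<in> carrier_mat k2 k2" using H g by (simp add: urep_carrier)
        have "\<sigma> g * (B' * C) = (\<sigma> g * B') * C" by (rule assoc_mult_mat[symmetric, OF sg B'c Cc])
        also have "\<sigma> g * B' = B' * \<sigma>2 g" using iso' g by (simp add: isoinv_def \<sigma>2_def)
        also have "(B' * \<sigma>2 g) * C = B' * (\<sigma>2 g * C)" by (rule assoc_mult_mat[OF B'c s2g Cc])
        also have "\<sigma>2 g * C = C * \<rho>2 g" using H g by simp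
        also have "B' * (C * \<rho>2 g) = (B' * C) * \<rho>2 g" by (rule assoc_mult_mat[symmetric, OF B'c Cc r2g])
        finally show "\<sigma> g * (B' * C) = (B' * C) * \<rho>2 g" .
      qed
      thus "Re (char_inner G (character G \<rho>2) (character G \<pi>')) > 0"
        using gd H mult_carrier_mat[OF B'c Cc] iso_comp[OF B'c B'B' Cc CC] unfolding good_def by blast
    qed
    have k'p: "k' < p" using kk k1 by simp
    obtain M' J' where M': "M' \<ge> 1" "J' \<in> carrier_mat (d'*M') k'" "adj J' * J' = 1\<^sub>m k'"
      "\<forall>g\<in>carrier G. tensor_id (\<pi>' g) M' * J' = J' * \<sigma>2 g"
      using less.IH[OF k'p s2 gd2] by blast
    have Ac: "\<And>g. g \<in> carrier G \<Longrightarrow> \<pi>' g \<in> carrier_mat d' d'" by (rule urep_carrier[OF w])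
    have Ac1: "tensor_id (\<pi>' g) 1 \<in> carrier_mat (d'*1) (d'*1)" if g: "g \<in> carrier G" for g
      by (rule tensor_id_carrier[OF Ac[OF g]])
    have AcM: "tensor_id (\<pi>' g) M' \<in> carrier_mat (d'*M') (d'*M')" if g: "g \<in> carrier G" for g
      by (rule tensor_id_carrier[OF Ac[OF g]])
    have J1': "J1 \<in> carrier_mat (d'*1) k" using J1(1) by simp
    have i1: "\<forall>g\<in>carrier G. tensor_id (\<pi>' g) 1 * J1 = J1 * (adj B * \<sigma> g * B)"
    proof
      fix g assume g: "g \<in> carrier G"
      have "tensor_id (\<pi>' g) 1 = \<pi>' g" by (rule tensor_id_1[OF Ac[OF g]])
      thus "tensor_id (\<pi>' g) 1 * J1 = J1 * (adj B * \<sigma> g * B)" using J1(3) g by (simp add: \<rho>_def)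
    qed
    have i2: "\<forall>g\<in>carrier G. tensor_id (\<pi>' g) M' * J' = J' * (adj B' * \<sigma> g * B')"
      using M'(4) by (simp add: \<sigma>2_def)
    note pa = piece[OF s iso Ac1 J1' J1(2) i1]
    note pb = piece[OF s iso' AcM M'(2) M'(3) i2]
    define J where "J = stack d' 1 M' (J1 * adj B) (J' * adj B')"
    have Jc: "J \<in> carrier_mat (d'*(1+M')) p" unfolding J_def by (rule stack_carrier[OF pa(1)])
    have "adj J * J = adj (J1 * adj B) * (J1 * adj B) + adj (J' * adj B') * (J' * adj B')"
      unfolding J_def by (rule stack_adj[OF pa(1) pb(1)])
    also have "\<dots> = B * adj B + B' * adj B'" using pa(2) pb(2) by simp
    finally have JJ: "adj J * J = 1\<^sub>m p" using dec by simp
    have "\<forall>g\<in>carrier G. tensor_id (\<pi>' g) (1+M') * J = J * \<sigma> g"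
    proof
      fix g assume g: "g \<in> carrier G"
      show "tensor_id (\<pi>' g) (1+M') * J = J * \<sigma> g"
        unfolding J_def using pa(3) pb(3) g
        by (intro stack_inter[OF pa(1) pb(1) Ac[OF g] urep_carrier[OF s g]]) auto
    qed
    thus ?thesis using Jc JJ by (intro exI[of _ "1+M'"] exI[of _ J]) auto
  qed
qed

end

lemma success_subset:
  fixes G :: "('g,'b) monoid_scheme" and \<pi> \<pi>' :: "'g \<Rightarrow> complex mat" and f :: "'g \<Rightarrow> 'x"
  assumes grp: "group G" and fin: "finite (carrier G)"
    and u: "unitary_rep G d \<pi>" and u': "unitary_rep G d' \<pi>'"
    and sub: "Irr_in G \<pi> \<subseteq> Irr_in G \<pi>'"
  shows "{success G \<pi> f N \<psi> Us E | N \<psi> Us E. algorithm d t N \<psi> Us E}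
       \<subseteq> {success G \<pi>' f N \<psi> Us E | N \<psi> Us E. algorithm d' t N \<psi> Us E}"
proof -
  interpret fgrp G using grp fin by (simp add: fgrp_def fgrp_axioms_def)
  have gd: "good \<pi>' \<pi> d"
    unfolding good_def
  proof (intro allI impI)
    fix k \<rho> C
    assume H: "unitary_rep G k \<rho> \<and> irreducible_rep G k \<rho> \<and> C \<in> carrier_mat d k \<and>
        adj C * C = 1\<^sub>m k \<and> (\<forall>g\<in>carrier G. \<pi> g * C = C * \<rho> g)"
    have k: "k > 0" using H by (simp add: irreducible_rep_def)
    have pos: "Re (char_inner G (character G \<rho>) (character G \<pi>)) > 0"
      using H k by (intro sub_char_pos[OF u]) auto
    have "character G \<rho> \<in> irr_chars G" using H by (auto simp: irr_chars_def)
    hence "character G \<rho> \<in> Irr_in G \<pi>" using pos by (simp add: Irr_in_def)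
    hence "character G \<rho> \<in> Irr_in G \<pi>'" using sub by blast
    thus "Re (char_inner G (character G \<rho>) (character G \<pi>')) > 0" by (simp add: Irr_in_def)
  qed
  obtain M J where MJ: "M \<ge> 1" "J \<in> carrier_mat (d'*M) d" "adj J * J = 1\<^sub>m d"
    "\<forall>g\<in>carrier G. tensor_id (\<pi>' g) M * J = J * \<pi> g"
    using embed[OF u' u gd] by blast
  have pic: "\<forall>g\<in>carrier G. \<pi> g \<in> carrier_mat d d" using u by (simp add: urep_carrier)
  have pic': "\<forall>g\<in>carrier G. \<pi>' g \<in> carrier_mat d' d'" using u' by (simp add: urep_carrier)
  show ?thesis
  proof
    fix x assume "x \<in> {success G \<pi> f N \<psi> Us E | N \<psi> Us E. algorithm d t N \<psi> Us E}"
    then obtain N \<psi> Us E where x: "x = success G \<pi> f N \<psi> Us E" and alg: "algorithm d t N \<psi> Us E" by blast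
    from simulate[OF MJ(2) MJ(3) MJ(1) MJ(4) pic pic' alg, of f]
    obtain N' \<psi>' Us' E' where "algorithm d' t N' \<psi>' Us' E'" "success G \<pi>' f N' \<psi>' Us' E' = success G \<pi> f N \<psi> Us E"
      by blast
    thus "x \<in> {success G \<pi>' f N \<psi> Us E | N \<psi> Us E. algorithm d' t N \<psi> Us E}" using x by force
  qed
qed

theorem lemma2:
  fixes G :: "('g,'b) monoid_scheme"
    and \<pi> \<pi>' :: "'g \<Rightarrow> complex mat"
    and d d' :: nat
    and f :: "'g \<Rightarrow> 'x"
    and t :: nat
  assumes "group G" and "finite (carrier G)"
    and "unitary_rep G d \<pi>" and "unitary_rep G d' \<pi>'"
    and "Irr_in G \<pi> = Irr_in G \<pi>'"
    and "t \<ge> 1"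
  shows "opt_success G d \<pi> f t = opt_success G d' \<pi>' f t"
proof -
  have "{success G \<pi> f N \<psi> Us E | N \<psi> Us E. algorithm d t N \<psi> Us E}
       = {success G \<pi>' f N \<psi> Us E | N \<psi> Us E. algorithm d' t N \<psi> Us E}"
    using success_subset[OF assms(1-4), of f t] success_subset[OF assms(1,2,4,3), of f t] assms(5)
    by (intro equalityI) auto
  thus ?thesis unfolding opt_success_def by simp
qed

end
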